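(* Let $H$ be a finitely generated group, let $\phi\in\operatorname{Aut}(H)$ and let $K$ be a proper subgroup of $H$. Let $G=H\ast_{(K,\phi)}=\langle H, t;\ tkt^{-1}=\phi(k),\ k\in K\rangle$. Then $G$ is residually finite if and only if $H$ is residually finite and $K$ is residually separable in $H$.
   Context: For a group $H$, $\phi\in\operatorname{Aut}(H)$ and a proper subgroup $K\lneq H$, the automorphism-induced HNN-extension $H\ast_{(K,\phi)}$ is the group given by the relative presentation $\langle H, t;\ tkt^{-1}=\phi(k),\ k\in K\rangle$. A subgroup $K$ of $H$ is residually separable in $H$ if for every $x\in H\setminus K$ there exists a finite index normal subgroup $N$ of $H$ such that $x\notin KN$. *)

theory Defs
  imports "HOL-Algebra.Coset" "HOL-Algebra.Generated_Groups"
begin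

text \<open>Letters: Inl h (h in H), Inr True = t, Inr False = t^-1.\<close>

definition hnn_words :: "('a, 'b) monoid_scheme \<Rightarrow> ('a + bool) list set" where
  "hnn_words H = lists (Inl ` carrier H \<union> range Inr)"

inductive_set hnn_rel ::
  "('a, 'b) monoid_scheme \<Rightarrow> 'a set \<Rightarrow> ('a \<Rightarrow> 'a) \<Rightarrow> (('a + bool) list \<times> ('a + bool) list) set"
  for H K \<phi> where
  rel_refl: "w \<in> hnn_words H \<Longrightarrow> (w, w) \<in> hnn_rel H K \<phi>"
| rel_sym: "(u, v) \<in> hnn_rel H K \<phi> \<Longrightarrow> (v, u) \<in> hnn_rel H K \<phi>"
| rel_trans: "(u, v) \<in> hnn_rel H K \<phi> \<Longrightarrow> (v, w) \<in> hnn_rel H K \<phi> \<Longrightarrow> (u, w) \<in> hnn_rel H K \<phi>"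
| ctxt: "(u, v) \<in> hnn_rel H K \<phi> \<Longrightarrow> x \<in> hnn_words H \<Longrightarrow> y \<in> hnn_words H \<Longrightarrow>
         (x @ u @ y, x @ v @ y) \<in> hnn_rel H K \<phi>"
| rel_mult: "a \<in> carrier H \<Longrightarrow> b \<in> carrier H \<Longrightarrow>
         ([Inl a, Inl b], [Inl (a \<otimes>\<^bsub>H\<^esub> b)]) \<in> hnn_rel H K \<phi>"
| rel_one: "([Inl \<one>\<^bsub>H\<^esub>], []) \<in> hnn_rel H K \<phi>"
| t_inv1: "([Inr True, Inr False], []) \<in> hnn_rel H K \<phi>"
| t_inv2: "([Inr False, Inr True], []) \<in> hnn_rel H K \<phi>"
| rel_conj: "k \<in> K \<Longrightarrow> ([Inr True, Inl k, Inr False], [Inl (\<phi> k)]) \<in> hnn_rel H K \<phi>"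

definition hnn_mult ::
  "('a, 'b) monoid_scheme \<Rightarrow> 'a set \<Rightarrow> ('a \<Rightarrow> 'a) \<Rightarrow> ('a + bool) list set \<Rightarrow> ('a + bool) list set \<Rightarrow> ('a + bool) list set" where
  "hnn_mult H K \<phi> A B = hnn_rel H K \<phi> `` {w. \<exists>a \<in> A. \<exists>b \<in> B. w = a @ b}"

definition HNN :: "('a, 'b) monoid_scheme \<Rightarrow> 'a set \<Rightarrow> ('a \<Rightarrow> 'a) \<Rightarrow> ('a + bool) list set monoid" where
  "HNN H K \<phi> = \<lparr>carrier = hnn_words H // hnn_rel H K \<phi>,
     mult = hnn_mult H K \<phi>,
     one = hnn_rel H K \<phi> `` {[]}\<rparr>"

definition finite_index_normal :: "('a, 'b) monoid_scheme \<Rightarrow> 'a set \<Rightarrow> bool" where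
  "finite_index_normal G N \<longleftrightarrow> N \<lhd> G \<and> finite (rcosets\<^bsub>G\<^esub> N)"

definition residually_finite :: "('a, 'b) monoid_scheme \<Rightarrow> bool" where
  "residually_finite G \<longleftrightarrow>
     (\<forall>x \<in> carrier G. x \<noteq> \<one>\<^bsub>G\<^esub> \<longrightarrow> (\<exists>N. finite_index_normal G N \<and> x \<notin> N))"

definition residually_separable :: "'a set \<Rightarrow> ('a, 'b) monoid_scheme \<Rightarrow> bool" where
  "residually_separable K H \<longleftrightarrow>
     (\<forall>x \<in> carrier H - K. \<exists>N. finite_index_normal H N \<and> x \<notin> K <#>\<^bsub>H\<^esub> N)"

definition finitely_generated :: "('a, 'b) monoid_scheme \<Rightarrow> bool" where
  "finitely_generated G \<longleftrightarrow> (\<exists>S. finite S \<and> S \<subseteq> carrier G \<and> generate G S = carrier G)"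

end

theory Submission
  imports Defs
begin


lemma (in group) rcos_eq_imp_mod:
  assumes "subgroup N G" "a \<in> carrier G" "b \<in> carrier G" "N #> a = N #> b"
  shows "a \<otimes> inv b \<in> N"
proof -
  have "a \<in> N #> b" using assms rcos_self by metis
  thus ?thesis using subgroup.rcos_module_imp[OF assms(1) is_group assms(3)] by blast
qed

lemma (in group) mod_imp_rcos_eq:
  assumes "subgroup N G" "a \<in> carrier G" "b \<in> carrier G" "a \<otimes> inv b \<in> N"
  shows "N #> a = N #> b"
proof -
  have "a \<in> N #> b" using subgroup.rcos_module_rev[OF assms(1) is_group assms(3) assms(2) assms(4)] .
  thus ?thesis using repr_independence[OF _ assms(3) assms(1)] by metis
qed

lemma (in group) finite_rcosets_map:
  assumes N: "subgroup N G" and fin: "finite (f ` carrier G)"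
    and eq: "\<And>a b. a \<in> carrier G \<Longrightarrow> b \<in> carrier G \<Longrightarrow> f a = f b \<Longrightarrow> a \<otimes> inv b \<in> N"
  shows "finite (rcosets N)"
proof -
  let ?g = "\<lambda>v. N #> (SOME a. a \<in> carrier G \<and> f a = v)"
  have "rcosets N = (\<lambda>a. N #> a) ` carrier G" unfolding RCOSETS_def by auto
  also have "\<dots> = ?g ` (f ` carrier G)"
  proof (intro equalityI subsetI)
    fix C assume "C \<in> (\<lambda>a. N #> a) ` carrier G"
    then obtain a where a: "a \<in> carrier G" "C = N #> a" by auto
    define b where "b = (SOME b. b \<in> carrier G \<and> f b = f a)"
    have b: "b \<in> carrier G \<and> f b = f a" unfolding b_def by (rule someI[of _ a]) (use a in auto)
    have "N #> b = N #> a" using mod_imp_rcos_eq[OF N _ a(1)] eq[of b a] b a by auto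
    thus "C \<in> ?g ` (f ` carrier G)" using a b unfolding b_def by (auto intro!: image_eqI[of _ _ "f a"])
  next
    fix C assume "C \<in> ?g ` (f ` carrier G)"
    then obtain a where a: "a \<in> carrier G" "C = ?g (f a)" by auto
    define b where "b = (SOME b. b \<in> carrier G \<and> f b = f a)"
    have b: "b \<in> carrier G \<and> f b = f a" unfolding b_def by (rule someI[of _ a]) (use a in auto)
    show "C \<in> (\<lambda>a. N #> a) ` carrier G" using a b unfolding b_def by auto
  qed
  finally show ?thesis using fin by simp
qed

lemma (in group) rcosets_fin_Int:
  assumes "finite_index_normal G A" "finite_index_normal G B"
  shows "finite_index_normal G (A \<inter> B)"
proof -
  have A: "A \<lhd> G" "finite (rcosets A)" and B: "B \<lhd> G" "finite (rcosets B)"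
    using assms unfolding finite_index_normal_def by auto
  have sA: "subgroup A G" and sB: "subgroup B G" using A B normal_imp_subgroup by auto
  have n: "A \<inter> B \<lhd> G" using normal_subgroup_intersect A B by auto
  have "finite (rcosets (A \<inter> B))"
  proof (rule finite_rcosets_map[where f = "\<lambda>a. (A #> a, B #> a)"])
    show "subgroup (A \<inter> B) G" using n normal_imp_subgroup by auto
    have "(\<lambda>a. (A #> a, B #> a)) ` carrier G \<subseteq> (rcosets A) \<times> (rcosets B)"
      unfolding RCOSETS_def by auto
    thus "finite ((\<lambda>a. (A #> a, B #> a)) ` carrier G)"
      using A B finite_subset by blast
    fix a b assume "a \<in> carrier G" "b \<in> carrier G" "(A #> a, B #> a) = (A #> b, B #> b)"
    thus "a \<otimes> inv b \<in> A \<inter> B" using rcos_eq_imp_mod[OF sA] rcos_eq_imp_mod[OF sB] by auto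
  qed
  thus ?thesis using n unfolding finite_index_normal_def by auto
qed

lemma fin_normal_preimage:
  assumes G: "group G" and G': "group G'" and h: "h \<in> hom G G'"
    and N: "finite_index_normal G' N"
  shows "finite_index_normal G {x \<in> carrier G. h x \<in> N}"
proof -
  interpret G: group G by fact
  interpret G': group G' by fact
  interpret gh: group_hom G G' h using G G' h by (simp add: group_hom_axioms_def group_hom_def)
  have Nn: "N \<lhd> G'" and Nf: "finite (rcosets\<^bsub>G'\<^esub> N)" using N unfolding finite_index_normal_def by auto
  have sN: "subgroup N G'" using Nn normal_imp_subgroup by auto
  let ?P = "{x \<in> carrier G. h x \<in> N}"
  have sP: "subgroup ?P G"
  proof
    show "?P \<subseteq> carrier G" by auto
    show "\<one>\<^bsub>G\<^esub> \<in> ?P" using subgroup.one_closed[OF sN] by auto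
    fix x y assume "x \<in> ?P" "y \<in> ?P"
    thus "x \<otimes>\<^bsub>G\<^esub> y \<in> ?P" using subgroup.m_closed[OF sN] by auto
  next
    fix x assume "x \<in> ?P"
    thus "inv\<^bsub>G\<^esub> x \<in> ?P" using subgroup.m_inv_closed[OF sN] by auto
  qed
  have nP: "?P \<lhd> G"
  proof (rule G.normal_invI[OF sP])
    fix x y assume "x \<in> carrier G" "y \<in> ?P"
    thus "x \<otimes>\<^bsub>G\<^esub> y \<otimes>\<^bsub>G\<^esub> inv\<^bsub>G\<^esub> x \<in> ?P"
      using G'.normal_invE(2)[OF Nn, of "h x" "h y"] by auto
  qed
  have "finite (rcosets\<^bsub>G\<^esub> ?P)"
  proof (rule G.finite_rcosets_map[OF sP, where f = "\<lambda>a. N #>\<^bsub>G'\<^esub> h a"])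
    have "(\<lambda>a. N #>\<^bsub>G'\<^esub> h a) ` carrier G \<subseteq> rcosets\<^bsub>G'\<^esub> N" unfolding RCOSETS_def using gh.hom_closed by blast
    thus "finite ((\<lambda>a. N #>\<^bsub>G'\<^esub> h a) ` carrier G)" using Nf finite_subset by blast
    fix a b assume "a \<in> carrier G" "b \<in> carrier G" "N #>\<^bsub>G'\<^esub> h a = N #>\<^bsub>G'\<^esub> h b"
    thus "a \<otimes>\<^bsub>G\<^esub> inv\<^bsub>G\<^esub> b \<in> ?P" using G'.rcos_eq_imp_mod[OF sN, of "h a" "h b"] by auto
  qed
  thus ?thesis using nP unfolding finite_index_normal_def by auto
qed

lemma iso_image_eq_preimage:
  assumes G: "group G" and phi: "\<phi> \<in> iso G G" and N: "N \<subseteq> carrier G"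
  shows "\<phi> ` N = {x \<in> carrier G. inv_into (carrier G) \<phi> x \<in> N}"
proof -
  have b: "bij_betw \<phi> (carrier G) (carrier G)" using phi unfolding iso_def by auto
  show ?thesis
  proof (intro equalityI subsetI)
    fix x assume "x \<in> \<phi> ` N"
    then obtain y where "y \<in> N" "x = \<phi> y" by auto
    thus "x \<in> {x \<in> carrier G. inv_into (carrier G) \<phi> x \<in> N}"
      using b N by (auto simp: bij_betw_def inv_into_f_f bij_betw_apply)
  next
    fix x assume "x \<in> {x \<in> carrier G. inv_into (carrier G) \<phi> x \<in> N}"
    thus "x \<in> \<phi> ` N" using b by (auto simp: bij_betw_def f_inv_into_f intro!: image_eqI[of _ _ "inv_into (carrier G) \<phi> x"])
  qed
qed

lemma fin_normal_iso_image:
  assumes G: "group G" and phi: "\<phi> \<in> iso G G" and N: "finite_index_normal G N"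
  shows "finite_index_normal G (\<phi> ` N)"
proof -
  have "N \<subseteq> carrier G" using N unfolding finite_index_normal_def using normal_imp_subgroup subgroup.subset by blast
  hence e: "\<phi> ` N = {x \<in> carrier G. inv_into (carrier G) \<phi> x \<in> N}" using iso_image_eq_preimage[OF G phi] by auto
  have "inv_into (carrier G) \<phi> \<in> iso G G" using group.iso_set_sym[OF G phi] .
  hence "inv_into (carrier G) \<phi> \<in> hom G G" unfolding iso_def by auto
  thus ?thesis unfolding e using fin_normal_preimage[OF G G _ N] by blast
qed



lemma (in group) lcos_rcos_assoc:
  "\<lbrakk> N \<subseteq> carrier G; h \<in> carrier G; a \<in> carrier G \<rbrakk> \<Longrightarrow> h <# (N #> a) = (h <# N) #> a"
  by (force simp add: l_coset_def r_coset_def m_assoc)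

lemma (in group) normal_lmult_rcos:
  assumes "N \<lhd> G" "h \<in> carrier G" "a \<in> carrier G"
  shows "h <# (N #> a) = N #> (h \<otimes> a)"
proof -
  have s: "N \<subseteq> carrier G" using assms(1) normal_imp_subgroup subgroup.subset by blast
  have "h <# (N #> a) = (h <# N) #> a" using lcos_rcos_assoc[OF s assms(2,3)] .
  also have "h <# N = N #> h" using normal.coset_eq[OF assms(1)] assms(2) by auto
  finally show ?thesis using coset_mult_assoc[OF s assms(2,3)] by simp
qed

definition Acode :: "('a, 'b) monoid_scheme \<Rightarrow> (nat \<Rightarrow> 'a set) \<Rightarrow> nat \<Rightarrow> 'a \<Rightarrow> nat \<Rightarrow> nat" where
  "Acode G \<gamma> c h i = inv_into {0..<c} \<gamma> (h <#\<^bsub>G\<^esub> \<gamma> i)"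

context group
begin

lemma lmult_rcosets:
  assumes "N \<lhd> G" "h \<in> carrier G" "C \<in> rcosets N"
  shows "h <# C \<in> rcosets N"
proof -
  obtain a where a: "a \<in> carrier G" "C = N #> a" using assms(3) unfolding RCOSETS_def by auto
  have s: "N \<subseteq> carrier G" using assms(1) normal_imp_subgroup subgroup.subset by blast
  show ?thesis using normal_lmult_rcos[OF assms(1,2) a(1)] a s assms(2) rcosetsI by auto
qed

lemma rcosets_sub: "N \<lhd> G \<Longrightarrow> C \<in> rcosets N \<Longrightarrow> C \<subseteq> carrier G"
  using subgroup.rcosets_carrier[OF normal_imp_subgroup is_group] by blast

lemma Acode_props:
  assumes N: "N \<lhd> G" and g: "bij_betw \<gamma> {0..<c} (rcosets N)" and h: "h \<in> carrier G" and i: "i < c"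
  shows "Acode G \<gamma> c h i < c" "\<gamma> (Acode G \<gamma> c h i) = h <# \<gamma> i"
proof -
  have "\<gamma> i \<in> rcosets N" using bij_betw_apply[OF g] i by simp
  hence m: "h <# \<gamma> i \<in> rcosets N" using lmult_rcosets N h by blast
  hence hm: "h <# \<gamma> i \<in> \<gamma> ` {0..<c}" using g unfolding bij_betw_def by simp
  show "Acode G \<gamma> c h i < c" unfolding Acode_def using inv_into_into[OF hm] by simp
  show "\<gamma> (Acode G \<gamma> c h i) = h <# \<gamma> i" unfolding Acode_def using f_inv_into_f[OF hm] .
qed

lemma Acode_mult:
  assumes N: "N \<lhd> G" and g: "bij_betw \<gamma> {0..<c} (rcosets N)" and h: "h \<in> carrier G" "h' \<in> carrier G" and i: "i < c"
  shows "Acode G \<gamma> c (h \<otimes> h') i = Acode G \<gamma> c h (Acode G \<gamma> c h' i)"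
proof -
  have "\<gamma> i \<in> rcosets N" using bij_betw_apply[OF g] i by simp
  hence s: "\<gamma> i \<subseteq> carrier G" using rcosets_sub N by auto
  have "h <# \<gamma> (Acode G \<gamma> c h' i) = h <# (h' <# \<gamma> i)" using Acode_props(2)[OF N g h(2) i] by simp
  also have "\<dots> = (h \<otimes> h') <# \<gamma> i" using lcos_m_assoc s h by auto
  finally show ?thesis unfolding Acode_def by simp
qed

lemma Acode_one:
  assumes N: "N \<lhd> G" and g: "bij_betw \<gamma> {0..<c} (rcosets N)" and i: "i < c"
  shows "Acode G \<gamma> c \<one> i = i"
proof -
  have "\<gamma> i \<in> rcosets N" using bij_betw_apply[OF g] i by simp
  hence s: "\<gamma> i \<subseteq> carrier G" using rcosets_sub N by auto
  hence "\<one> <# \<gamma> i = \<gamma> i" using lcos_mult_one by auto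
  thus ?thesis unfolding Acode_def using g i bij_betw_inv_into_left by fastforce
qed

lemma Acode_inj:
  assumes N: "N \<lhd> G" and g: "bij_betw \<gamma> {0..<c} (rcosets N)" and h: "h \<in> carrier G" and i: "i < c" "j < c"
    and e: "Acode G \<gamma> c h i = Acode G \<gamma> c h j"
  shows "i = j"
proof -
  have "Acode G \<gamma> c (inv h) (Acode G \<gamma> c h i) = Acode G \<gamma> c (inv h) (Acode G \<gamma> c h j)" using e by simp
  thus ?thesis using Acode_mult[OF N g, of "inv h" h] Acode_one[OF N g] h i by (simp add: l_inv)
qed

lemma Acode_mem:
  assumes N: "N \<lhd> G" and g: "bij_betw \<gamma> {0..<c} (rcosets N)" and h: "h \<in> carrier G"
  shows "h \<in> N \<longleftrightarrow> Acode G \<gamma> c h (inv_into {0..<c} \<gamma> N) = inv_into {0..<c} \<gamma> N"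
proof -
  have sg: "subgroup N G" using N normal_imp_subgroup by auto
  have Nr: "N \<in> rcosets N" using subgroup.subgroup_in_rcosets[OF sg is_group] .
  let ?i = "inv_into {0..<c} \<gamma> N"
  have i: "?i < c" "\<gamma> ?i = N" using Nr g
    by (auto simp: bij_betw_def inv_into_into f_inv_into_f) (metis atLeastLessThan_iff bij_betw_def g inv_into_into)
  have "Acode G \<gamma> c h ?i = ?i \<longleftrightarrow> h <# N = N"
  proof
    assume "Acode G \<gamma> c h ?i = ?i"
    thus "h <# N = N" using Acode_props(2)[OF N g h i(1)] i by simp
  next
    assume "h <# N = N"
    thus "Acode G \<gamma> c h ?i = ?i" unfolding Acode_def using i by simp
  qed
  also have "\<dots> \<longleftrightarrow> h \<in> N"
  proof
    assume "h <# N = N"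
    moreover have "h \<in> h <# N" using subgroup.one_closed[OF sg] h unfolding l_coset_def by force
    ultimately show "h \<in> N" by simp
  qed (use coset_join3 sg h in auto)
  finally show ?thesis by simp
qed

lemma Acode_generate:
  assumes N1: "N1 \<lhd> G" and g1: "bij_betw \<gamma>1 {0..<c} (rcosets N1)"
    and N2: "N2 \<lhd> G" and g2: "bij_betw \<gamma>2 {0..<c} (rcosets N2)"
    and S: "S \<subseteq> carrier G"
    and eq: "\<And>s i. s \<in> S \<Longrightarrow> i < c \<Longrightarrow> Acode G \<gamma>1 c s i = Acode G \<gamma>2 c s i"
    and h: "h \<in> generate G S"
  shows "\<forall>i<c. Acode G \<gamma>1 c h i = Acode G \<gamma>2 c h i"
  using h
proof (induction rule: generate.induct)
  case one
  then show ?case using Acode_one[OF N1 g1] Acode_one[OF N2 g2] by simp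
next
  case (incl h)
  then show ?case using eq by simp
next
  case (inv s)
  have sc: "s \<in> carrier G" using inv S by auto
  show ?case
  proof (intro allI impI)
    fix i assume i: "i < c"
    let ?a1 = "Acode G \<gamma>1 c (inv s) i" and ?a2 = "Acode G \<gamma>2 c (inv s) i"
    have a: "?a1 < c" "?a2 < c" using Acode_props(1)[OF N1 g1 _ i] Acode_props(1)[OF N2 g2 _ i] sc by auto
    have "Acode G \<gamma>1 c s ?a1 = i" using Acode_mult[OF N1 g1, of s "inv s" i] Acode_one[OF N1 g1 i] sc i by (simp add: r_inv)
    moreover have "Acode G \<gamma>2 c s ?a2 = i" using Acode_mult[OF N2 g2, of s "inv s" i] Acode_one[OF N2 g2 i] sc i by (simp add: r_inv)
    ultimately have "Acode G \<gamma>1 c s ?a1 = Acode G \<gamma>1 c s ?a2" using eq[OF inv a(2)] by simp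
    thus "?a1 = ?a2" using Acode_inj[OF N1 g1 sc a] by simp
  qed
next
  case (eng h1 h2)
  have c: "h1 \<in> carrier G" "h2 \<in> carrier G" using eng generate_in_carrier S by auto
  show ?case
  proof (intro allI impI)
    fix i assume i: "i < c"
    have "Acode G \<gamma>2 c h2 i < c" using Acode_props(1)[OF N2 g2 c(2) i] .
    thus "Acode G \<gamma>1 c (h1 \<otimes> h2) i = Acode G \<gamma>2 c (h1 \<otimes> h2) i"
      using Acode_mult[OF N1 g1 c i] Acode_mult[OF N2 g2 c i] eng.IH i by simp
  qed
qed

end

lemma (in group) finite_bounded_normals:
  assumes S: "finite S" "S \<subseteq> carrier G" "generate G S = carrier G"
  shows "finite {N. finite_index_normal G N \<and> card (rcosets N) \<le> d}"
proof -
  let ?F = "{N. finite_index_normal G N \<and> card (rcosets N) \<le> d}"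
  define gam where "gam N = (SOME \<gamma>. bij_betw \<gamma> {0..<card (rcosets N)} (rcosets N))" for N
  have gam: "bij_betw (gam N) {0..<card (rcosets N)} (rcosets N)" if "N \<in> ?F" for N
  proof -
    have "finite (rcosets N)" using that unfolding finite_index_normal_def by auto
    then obtain \<gamma> where "bij_betw \<gamma> {0..<card (rcosets N)} (rcosets N)" using ex_bij_betw_nat_finite by blast
    thus ?thesis unfolding gam_def by (rule someI[where P="\<lambda>\<gamma>. bij_betw \<gamma> {0..<card (rcosets N)} (rcosets N)"])
  qed
  define code where "code N = (card (rcosets N),
      restrict (\<lambda>s. restrict (\<lambda>i. Acode G (gam N) (card (rcosets N)) s i) {0..<card (rcosets N)}) S,
      inv_into {0..<card (rcosets N)} (gam N) N)" for N
  let ?T = "\<Union>c\<in>{..d}. {c} \<times> (Pi\<^sub>E S (\<lambda>_. Pi\<^sub>E {0..<c} (\<lambda>_. {0..<c}))) \<times> {0..<c}"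
  have finT: "finite ?T" using S(1) by (intro finite_UN_I finite_SigmaI finite_PiE) auto
  have sub: "code ` ?F \<subseteq> ?T"
  proof
    fix x assume "x \<in> code ` ?F"
    then obtain N where N: "N \<in> ?F" "x = code N" by auto
    let ?c = "card (rcosets N)"
    have Nn: "N \<lhd> G" using N unfolding finite_index_normal_def by auto
    have Nr: "N \<in> rcosets N" using subgroup.subgroup_in_rcosets[OF normal_imp_subgroup[OF Nn] is_group] .
    have "inv_into {0..<?c} (gam N) N \<in> {0..<?c}" using gam[OF N(1)] Nr
      by (metis bij_betw_def inv_into_into)
    moreover have "restrict (\<lambda>s. restrict (\<lambda>i. Acode G (gam N) ?c s i) {0..<?c}) S \<in> Pi\<^sub>E S (\<lambda>_. Pi\<^sub>E {0..<?c} (\<lambda>_. {0..<?c}))"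
      using Acode_props(1)[OF Nn gam[OF N(1)]] S(2) by auto
    ultimately show "x \<in> ?T" using N unfolding code_def by auto
  qed
  have inj: "inj_on code ?F"
  proof (rule inj_onI)
    fix N1 N2 assume N1: "N1 \<in> ?F" and N2: "N2 \<in> ?F" and e: "code N1 = code N2"
    let ?c = "card (rcosets N1)"
    have c: "card (rcosets N2) = ?c" using e unfolding code_def by simp
    have n1: "N1 \<lhd> G" and n2: "N2 \<lhd> G" using N1 N2 unfolding finite_index_normal_def by auto
    have g1: "bij_betw (gam N1) {0..<?c} (rcosets N1)" using gam[OF N1] .
    have g2: "bij_betw (gam N2) {0..<?c} (rcosets N2)" using gam[OF N2] c by simp
    have r: "restrict (\<lambda>s. restrict (\<lambda>i. Acode G (gam N1) ?c s i) {0..<?c}) S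
           = restrict (\<lambda>s. restrict (\<lambda>i. Acode G (gam N2) ?c s i) {0..<?c}) S"
      using e c unfolding code_def by simp
    have eq: "Acode G (gam N1) ?c s i = Acode G (gam N2) ?c s i" if "s \<in> S" "i < ?c" for s i
    proof -
      have "restrict (\<lambda>s. restrict (\<lambda>i. Acode G (gam N1) ?c s i) {0..<?c}) S s i
           = restrict (\<lambda>s. restrict (\<lambda>i. Acode G (gam N2) ?c s i) {0..<?c}) S s i" using r by simp
      thus ?thesis using that by simp
    qed
    have all: "\<forall>i<?c. Acode G (gam N1) ?c h i = Acode G (gam N2) ?c h i" if "h \<in> carrier G" for h
      using Acode_generate[OF n1 g1 n2 g2 S(2) eq] that S(3) by auto
    have ii: "inv_into {0..<?c} (gam N1) N1 = inv_into {0..<?c} (gam N2) N2" using e c unfolding code_def by simp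
    have Nr: "N1 \<in> rcosets N1" using subgroup.subgroup_in_rcosets[OF normal_imp_subgroup[OF n1] is_group] .
    have ilt: "inv_into {0..<?c} (gam N1) N1 < ?c" using g1 Nr by (metis atLeastLessThan_iff bij_betw_def inv_into_into)
    have s1: "N1 \<subseteq> carrier G" and s2: "N2 \<subseteq> carrier G" using n1 n2 normal_imp_subgroup subgroup.subset by blast+
    show "N1 = N2"
    proof (intro equalityI subsetI)
      fix x assume x: "x \<in> N1"
      hence xc: "x \<in> carrier G" using s1 by auto
      show "x \<in> N2" using Acode_mem[OF n1 g1 xc] Acode_mem[OF n2 g2 xc] x all[OF xc] ii ilt by simp
    next
      fix x assume x: "x \<in> N2"
      hence xc: "x \<in> carrier G" using s2 by auto
      show "x \<in> N1" using Acode_mem[OF n1 g1 xc] Acode_mem[OF n2 g2 xc] x all[OF xc] ii ilt by simp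
    qed
  qed
  show ?thesis using finite_imageD[OF finite_subset[OF sub finT] inj] .
qed



lemma fin_normal_Inter:
  assumes G: "group G" and F: "finite F" "F \<noteq> {}" "\<forall>N\<in>F. finite_index_normal G N"
  shows "finite_index_normal G (\<Inter>F)"
  using F(1,2,3)
proof (induction F rule: finite_ne_induct)
  case (singleton x)
  then show ?case by simp
next
  case (insert x F)
  then show ?case using group.rcosets_fin_Int[OF G] by simp
qed

lemma fin_normal_sub: "finite_index_normal G N \<Longrightarrow> N \<subseteq> carrier G"
  unfolding finite_index_normal_def using normal_imp_subgroup subgroup.subset by blast

lemma (in group) iso_rcosets_image:
  assumes phi: "\<phi> \<in> iso G G" and N: "N \<subseteq> carrier G"
  shows "rcosets\<^bsub>G\<^esub> (\<phi> ` N) \<subseteq> (\<lambda>C. \<phi> ` C) ` (rcosets\<^bsub>G\<^esub> N)"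
proof
  have b: "bij_betw \<phi> (carrier G) (carrier G)" and hom: "\<phi> \<in> hom G G" using phi unfolding iso_def by auto
  fix C assume "C \<in> rcosets (\<phi> ` N)"
  then obtain b where bc: "b \<in> carrier G" "C = (\<phi> ` N) #> b" unfolding RCOSETS_def by auto
  define a where "a = inv_into (carrier G) \<phi> b"
  have a: "a \<in> carrier G" "\<phi> a = b" using b bc unfolding a_def bij_betw_def
    by (auto simp: inv_into_into f_inv_into_f)
  have "\<phi> ` (N #> a) = (\<phi> ` N) #> \<phi> a"
  proof (intro equalityI subsetI)
    fix x assume "x \<in> \<phi> ` (N #> a)"
    thus "x \<in> (\<phi> ` N) #> \<phi> a" unfolding r_coset_def using hom a N by (auto simp: hom_mult subsetD)
  next
    fix x assume "x \<in> (\<phi> ` N) #> \<phi> a"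
    then obtain n where n: "n \<in> N" "x = \<phi> n \<otimes> \<phi> a" unfolding r_coset_def by auto
    hence "x = \<phi> (n \<otimes> a)" using hom a N by (auto simp: hom_mult subsetD)
    thus "x \<in> \<phi> ` (N #> a)" using n unfolding r_coset_def by auto
  qed
  thus "C \<in> (\<lambda>C. \<phi> ` C) ` (rcosets N)" using a bc rcosetsI[OF N a(1)] by auto
qed

lemma (in group) fg_invariant_sub:
  assumes fg: "finitely_generated G" and phi: "\<phi> \<in> iso G G"
    and N: "finite_index_normal G N"
  shows "\<exists>M. finite_index_normal G M \<and> M \<subseteq> N \<and> \<phi> ` M = M"
proof -
  note G = is_group
  obtain S where S: "finite S" "S \<subseteq> carrier G" "generate G S = carrier G" using fg unfolding finitely_generated_def by auto
  define d where "d = card (rcosets N)"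
  define F where "F = {N'. finite_index_normal G N' \<and> card (rcosets N') \<le> d}"
  have finF: "finite F" unfolding F_def using finite_bounded_normals[OF S] .
  have NF: "N \<in> F" unfolding F_def d_def using N by auto
  have clos: "\<theta> ` N' \<in> F" if th: "\<theta> \<in> iso G G" and N': "N' \<in> F" for \<theta> N'
  proof -
    have fn: "finite_index_normal G N'" using N' unfolding F_def by auto
    have "card (rcosets (\<theta> ` N')) \<le> card ((\<lambda>C. \<theta> ` C) ` (rcosets N'))"
    proof -
      have fr: "finite (rcosets N')" using fn by (simp add: finite_index_normal_def)
      show ?thesis by (rule card_mono[OF finite_imageI[OF fr] iso_rcosets_image[OF th fin_normal_sub[OF fn]]])
    qed
    also have "\<dots> \<le> card (rcosets N')" using card_image_le fn unfolding finite_index_normal_def by blast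
    finally show ?thesis using fin_normal_iso_image[OF G th fn] N' unfolding F_def by auto
  qed
  define \<psi> where "\<psi> = inv_into (carrier G) \<phi>"
  have psi: "\<psi> \<in> iso G G" unfolding \<psi>_def using iso_set_sym[OF phi] .
  have b: "bij_betw \<phi> (carrier G) (carrier G)" using phi unfolding iso_def by auto
  have inv: "\<phi> ` (\<psi> ` N') = N'" if "N' \<subseteq> carrier G" for N'
  proof -
    have "\<forall>x\<in>N'. \<phi> (\<psi> x) = x" using that b unfolding \<psi>_def bij_betw_def by (simp add: f_inv_into_f subsetD)
    hence "(\<lambda>x. \<phi> (\<psi> x)) ` N' = N'" by simp
    thus ?thesis by (simp add: image_image)
  qed
  have FF: "(\<lambda>N'. \<phi> ` N') ` F = F"
  proof (intro equalityI subsetI)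
    fix x assume "x \<in> (\<lambda>N'. \<phi> ` N') ` F" thus "x \<in> F" using clos[OF phi] by auto
  next
    fix x assume x: "x \<in> F"
    hence "x \<subseteq> carrier G" using fin_normal_sub unfolding F_def by auto
    hence "x = \<phi> ` (\<psi> ` x)" using inv by auto
    thus "x \<in> (\<lambda>N'. \<phi> ` N') ` F" using clos[OF psi x] by auto
  qed
  define M where "M = \<Inter>F"
  have "\<phi> ` \<Inter>((\<lambda>x. x) ` F) = (\<Inter>x\<in>F. \<phi> ` x)"
  proof (rule image_INT[of \<phi> "carrier G"])
    show "inj_on \<phi> (carrier G)" using b unfolding bij_betw_def by blast
    show "\<forall>x\<in>F. x \<subseteq> carrier G" unfolding F_def using fin_normal_sub by blast
    show "N \<in> F" by (rule NF)
  qed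
  hence "\<phi> ` M = (\<Inter>x\<in>F. \<phi> ` x)" unfolding M_def by simp
  also have "\<dots> = M" unfolding M_def by (subst FF) (rule refl)
  finally have "\<phi> ` M = M" .
  moreover have "finite_index_normal G M"
  proof -
    have "\<forall>N\<in>F. finite_index_normal G N" unfolding F_def by blast
    moreover have "F \<noteq> {}" using NF by blast
    ultimately show ?thesis unfolding M_def using fin_normal_Inter[OF G finF] by blast
  qed
  moreover have "M \<subseteq> N" unfolding M_def using NF by auto
  ultimately show ?thesis by blast
qed



locale hnn = group H for H (structure) +
  fixes K :: "'a set" and \<phi> :: "'a \<Rightarrow> 'a"
  assumes sK: "subgroup K H" and phi: "\<phi> \<in> iso H H"
begin

abbreviation "R \<equiv> hnn_rel H K \<phi>"
abbreviation "W \<equiv> hnn_words H"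
abbreviation "GG \<equiv> HNN H K \<phi>"
abbreviation "cl u \<equiv> R `` {u}"

lemma phi_hom: "\<phi> \<in> hom H H" using phi unfolding iso_def by auto
lemma phi_bij: "bij_betw \<phi> (carrier H) (carrier H)" using phi unfolding iso_def by auto
lemma phi_closed: "x \<in> carrier H \<Longrightarrow> \<phi> x \<in> carrier H" using phi_hom unfolding hom_def by auto
lemma K_sub: "K \<subseteq> carrier H" using sK subgroup.subset by blast

lemma words_Nil [simp]: "[] \<in> W" by (simp add: hnn_words_def)
lemma Inr_range [simp]: "Inr b \<in> range Inr" by simp
lemma words_Cons: "(l # w \<in> W) \<longleftrightarrow> (l \<in> Inl ` carrier H \<union> range Inr) \<and> w \<in> W"
  by (simp add: hnn_words_def)
lemma words_append [simp]: "(u @ v \<in> W) \<longleftrightarrow> u \<in> W \<and> v \<in> W"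
  by (simp add: hnn_words_def)
lemma words_Inl [simp]: "(Inl h # w \<in> W) \<longleftrightarrow> h \<in> carrier H \<and> w \<in> W"
  by (auto simp add: hnn_words_def)
lemma words_Inr [simp]: "(Inr b # w \<in> W) \<longleftrightarrow> w \<in> W"
  by (auto simp add: hnn_words_def)

lemma rel_words: "(u, v) \<in> R \<Longrightarrow> u \<in> W \<and> v \<in> W"
  by (induction rule: hnn_rel.induct) (auto simp: K_sub[THEN subsetD] phi_closed)

lemma equivR: "equiv W R"
proof (rule equivI)
  show "refl_on W R" unfolding refl_on_def using rel_words hnn_rel.rel_refl by blast
  show "R \<subseteq> W \<times> W" using rel_words by auto
  show "sym R" unfolding sym_def using hnn_rel.rel_sym by blast
  show "trans R" unfolding trans_def using hnn_rel.rel_trans by blast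
qed

lemma rel_refl': "w \<in> W \<Longrightarrow> (w, w) \<in> R" by (rule hnn_rel.rel_refl)

lemma rel_app: "(u, u') \<in> R \<Longrightarrow> (v, v') \<in> R \<Longrightarrow> (u @ v, u' @ v') \<in> R"
proof -
  assume 1: "(u, u') \<in> R" and 2: "(v, v') \<in> R"
  have "([] @ u @ v, [] @ u' @ v) \<in> R" using hnn_rel.ctxt[OF 1, of "[]" v] rel_words[OF 2] by simp
  moreover have "(u' @ v @ [], u' @ v' @ []) \<in> R" using hnn_rel.ctxt[OF 2, of u' "[]"] rel_words[OF 1] by simp
  ultimately show ?thesis using hnn_rel.rel_trans by fastforce
qed

lemma rel_ctxt: "(u, u') \<in> R \<Longrightarrow> x \<in> W \<Longrightarrow> y \<in> W \<Longrightarrow> (x @ u @ y, x @ u' @ y) \<in> R"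
  by (rule hnn_rel.ctxt)

lemma carrier_GG: "carrier GG = W // R" by (simp add: HNN_def)
lemma one_GG: "\<one>\<^bsub>GG\<^esub> = cl []" by (simp add: HNN_def)

lemma cl_mult: assumes "u \<in> W" "v \<in> W" shows "cl u \<otimes>\<^bsub>GG\<^esub> cl v = cl (u @ v)"
proof -
  have "cl u \<otimes>\<^bsub>GG\<^esub> cl v = R `` {w. \<exists>a \<in> cl u. \<exists>b \<in> cl v. w = a @ b}"
    by (simp add: HNN_def hnn_mult_def)
  also have "\<dots> = cl (u @ v)"
  proof (intro equalityI subsetI)
    fix x assume "x \<in> R `` {w. \<exists>a \<in> cl u. \<exists>b \<in> cl v. w = a @ b}"
    then obtain a b where "(u, a) \<in> R" "(v, b) \<in> R" "(a @ b, x) \<in> R" by auto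
    hence "(u @ v, x) \<in> R" using rel_app hnn_rel.rel_trans by blast
    thus "x \<in> cl (u @ v)" by simp
  next
    fix x assume "x \<in> cl (u @ v)"
    moreover have "u \<in> cl u" "v \<in> cl v" using assms rel_refl' by auto
    ultimately show "x \<in> R `` {w. \<exists>a \<in> cl u. \<exists>b \<in> cl v. w = a @ b}" by blast
  qed
  finally show ?thesis .
qed

lemma cl_in: "u \<in> W \<Longrightarrow> cl u \<in> carrier GG" by (simp add: carrier_GG quotientI)

lemma cl_eq: "u \<in> W \<Longrightarrow> v \<in> W \<Longrightarrow> cl u = cl v \<longleftrightarrow> (u, v) \<in> R"
  using eq_equiv_class_iff[OF equivR] by blast

lemma carrier_GG_E: "A \<in> carrier GG \<Longrightarrow> (\<And>u. A = cl u \<Longrightarrow> u \<in> W \<Longrightarrow> P) \<Longrightarrow> P"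
  unfolding carrier_GG by (erule quotientE) blast

fun linv :: "'a + bool \<Rightarrow> 'a + bool" where
  "linv (Inl h) = Inl (inv h)" | "linv (Inr b) = Inr (\<not> b)"

definition winv :: "('a + bool) list \<Rightarrow> ('a + bool) list" where
  "winv w = rev (map linv w)"

lemma winv_Cons: "winv (l # w) = winv w @ [linv l]" by (simp add: winv_def)
lemma winv_Nil [simp]: "winv [] = []" by (simp add: winv_def)

lemma winv_words: "w \<in> W \<Longrightarrow> winv w \<in> W"
proof (induction w)
  case (Cons l w)
  then show ?case by (cases l) (auto simp: winv_Cons)
qed simp

lemma linv_cancel: "[l] \<in> W \<Longrightarrow> ([linv l, l], []) \<in> R"
proof (cases l)
  case (Inl h)
  assume "[l] \<in> W"
  hence h: "h \<in> carrier H" using Inl by auto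
  have "([Inl (inv h), Inl h], [Inl (inv h \<otimes> h)]) \<in> R" using hnn_rel.rel_mult[of "inv h" H h K \<phi>] h by simp
  moreover have "([Inl (inv h \<otimes> h)], []) \<in> R" using h hnn_rel.rel_one by simp
  ultimately show ?thesis using Inl hnn_rel.rel_trans by fastforce
next
  case (Inr b)
  then show ?thesis using hnn_rel.t_inv1 hnn_rel.t_inv2 by (cases b) auto
qed

lemma winv_cancel: "w \<in> W \<Longrightarrow> (winv w @ w, []) \<in> R"
proof (induction w)
  case Nil
  then show ?case using rel_refl' by simp
next
  case (Cons l w)
  have lw: "[l] \<in> W" "w \<in> W" using Cons.prems by (cases l; auto)+
  have "(winv w @ [linv l, l] @ w, winv w @ [] @ w) \<in> R"
    using rel_ctxt[OF linv_cancel[OF lw(1)] winv_words[OF lw(2)] lw(2)] .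
  hence "(winv (l # w) @ l # w, winv w @ w) \<in> R" by (simp add: winv_Cons)
  thus ?case using Cons.IH lw(2) hnn_rel.rel_trans by blast
qed

lemma group_GG: "group GG"
proof (rule groupI)
  fix x y assume "x \<in> carrier GG" "y \<in> carrier GG"
  thus "x \<otimes>\<^bsub>GG\<^esub> y \<in> carrier GG"
    by (elim carrier_GG_E) (simp add: cl_mult cl_in)
next
  show "\<one>\<^bsub>GG\<^esub> \<in> carrier GG" using one_GG cl_in by simp
next
  fix x y z assume "x \<in> carrier GG" "y \<in> carrier GG" "z \<in> carrier GG"
  thus "x \<otimes>\<^bsub>GG\<^esub> y \<otimes>\<^bsub>GG\<^esub> z = x \<otimes>\<^bsub>GG\<^esub> (y \<otimes>\<^bsub>GG\<^esub> z)"
    by (elim carrier_GG_E) (simp add: cl_mult)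
next
  fix x assume "x \<in> carrier GG"
  thus "\<one>\<^bsub>GG\<^esub> \<otimes>\<^bsub>GG\<^esub> x = x"
    by (elim carrier_GG_E) (simp add: cl_mult one_GG)
next
  fix x assume "x \<in> carrier GG"
  then obtain u where u: "x = cl u" "u \<in> W" by (elim carrier_GG_E)
  have "cl (winv u) \<otimes>\<^bsub>GG\<^esub> x = \<one>\<^bsub>GG\<^esub>"
    using u cl_mult[OF winv_words[OF u(2)] u(2)] winv_cancel[OF u(2)] cl_eq[of "winv u @ u" "[]"] winv_words one_GG
    by simp
  thus "\<exists>y\<in>carrier GG. y \<otimes>\<^bsub>GG\<^esub> x = \<one>\<^bsub>GG\<^esub>" using cl_in[OF winv_words[OF u(2)]] by blast
qed

lemma cl_inv: "u \<in> W \<Longrightarrow> inv\<^bsub>GG\<^esub> (cl u) = cl (winv u)"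
proof -
  assume u: "u \<in> W"
  have "cl (winv u) \<otimes>\<^bsub>GG\<^esub> cl u = \<one>\<^bsub>GG\<^esub>"
    using u cl_mult[OF winv_words[OF u] u] winv_cancel[OF u] cl_eq[of "winv u @ u" "[]"] winv_words one_GG
    by simp
  thus ?thesis using group.inv_equality[OF group_GG] cl_in u winv_words by blast
qed

end

fun evw :: "('a \<Rightarrow> 'x \<Rightarrow> 'x) \<Rightarrow> ('x \<Rightarrow> 'x) \<Rightarrow> ('x \<Rightarrow> 'x) \<Rightarrow> ('a + bool) list \<Rightarrow> 'x \<Rightarrow> 'x" where
  "evw act T Ti [] p = p"
| "evw act T Ti (Inl h # w) p = act h (evw act T Ti w p)"
| "evw act T Ti (Inr b # w) p = (if b then T else Ti) (evw act T Ti w p)"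

lemma evw_append: "evw act T Ti (u @ v) p = evw act T Ti u (evw act T Ti v p)"
proof (induction u arbitrary: p)
  case (Cons l u)
  then show ?case by (cases l) auto
qed simp

locale hnn_act = hnn +
  fixes X :: "'x set" and act :: "'a \<Rightarrow> 'x \<Rightarrow> 'x" and T Ti :: "'x \<Rightarrow> 'x"
  assumes act_closed: "h \<in> carrier H \<Longrightarrow> p \<in> X \<Longrightarrow> act h p \<in> X"
    and act_mult: "h \<in> carrier H \<Longrightarrow> h' \<in> carrier H \<Longrightarrow> p \<in> X \<Longrightarrow> act (h \<otimes> h') p = act h (act h' p)"
    and act_one: "p \<in> X \<Longrightarrow> act \<one> p = p"
    and T_closed: "p \<in> X \<Longrightarrow> T p \<in> X"
    and Ti_closed: "p \<in> X \<Longrightarrow> Ti p \<in> X"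
    and T_Ti: "p \<in> X \<Longrightarrow> T (Ti p) = p"
    and Ti_T: "p \<in> X \<Longrightarrow> Ti (T p) = p"
    and T_conj: "k \<in> K \<Longrightarrow> p \<in> X \<Longrightarrow> T (act k (Ti p)) = act (\<phi> k) p"
begin

abbreviation "ev \<equiv> evw act T Ti"

lemma ev_closed: "w \<in> W \<Longrightarrow> p \<in> X \<Longrightarrow> ev w p \<in> X"
proof (induction w arbitrary: p)
  case (Cons l w)
  then show ?case by (cases l) (auto simp: act_closed T_closed Ti_closed)
qed simp

lemma ev_rel: "(u, v) \<in> R \<Longrightarrow> p \<in> X \<Longrightarrow> ev u p = ev v p"
proof (induction arbitrary: p rule: hnn_rel.induct)
  case (ctxt u v x y)
  have "ev y p \<in> X" using ev_closed ctxt by blast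
  thus ?case using ctxt by (simp add: evw_append)
next
  case (rel_mult a b)
  then show ?case by (simp add: act_mult)
next
  case rel_one
  then show ?case by (simp add: act_one)
next
  case t_inv1
  then show ?case by (simp add: T_Ti)
next
  case t_inv2
  then show ?case by (simp add: Ti_T)
next
  case (rel_conj k)
  then show ?case by (simp add: T_conj)
qed auto

definition Psi :: "('a + bool) list set \<Rightarrow> 'x \<Rightarrow> 'x" where
  "Psi A = ev (SOME w. w \<in> A)"

lemma Psi_cl: assumes "u \<in> W" "p \<in> X" shows "Psi (cl u) p = ev u p"
proof -
  have "u \<in> cl u" using assms rel_refl' by auto
  hence "(SOME w. w \<in> cl u) \<in> cl u" by (rule someI)
  hence "(u, SOME w. w \<in> cl u) \<in> R" by simp
  thus ?thesis unfolding Psi_def using ev_rel assms(2) by metis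
qed

lemma Psi_closed: "A \<in> carrier GG \<Longrightarrow> p \<in> X \<Longrightarrow> Psi A p \<in> X"
  by (elim carrier_GG_E) (simp add: Psi_cl ev_closed)

lemma Psi_mult: "A \<in> carrier GG \<Longrightarrow> B \<in> carrier GG \<Longrightarrow> p \<in> X \<Longrightarrow> Psi (A \<otimes>\<^bsub>GG\<^esub> B) p = Psi A (Psi B p)"
  by (elim carrier_GG_E) (simp add: Psi_cl ev_closed cl_mult evw_append)

lemma Psi_one: "p \<in> X \<Longrightarrow> Psi \<one>\<^bsub>GG\<^esub> p = p"
  by (simp add: one_GG Psi_cl)

lemma Psi_inv: "A \<in> carrier GG \<Longrightarrow> p \<in> X \<Longrightarrow> Psi (inv\<^bsub>GG\<^esub> A) (Psi A p) = p"
  using Psi_mult[of "inv\<^bsub>GG\<^esub> A" A p] group.l_inv[OF group_GG] group.inv_closed[OF group_GG] Psi_one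
  by simp

lemma Psi_inv2: "A \<in> carrier GG \<Longrightarrow> p \<in> X \<Longrightarrow> Psi A (Psi (inv\<^bsub>GG\<^esub> A) p) = p"
  using Psi_mult[of A "inv\<^bsub>GG\<^esub> A" p] group.r_inv[OF group_GG] group.inv_closed[OF group_GG] Psi_one
  by simp

lemma kernel_fin_normal:
  assumes fin: "finite X"
  shows "finite_index_normal GG {A \<in> carrier GG. \<forall>p\<in>X. Psi A p = p}"
proof -
  interpret G: group GG by (rule group_GG)
  let ?N = "{A \<in> carrier GG. \<forall>p\<in>X. Psi A p = p}"
  have sN: "subgroup ?N GG"
  proof
    show "?N \<subseteq> carrier GG" by auto
    show "\<one>\<^bsub>GG\<^esub> \<in> ?N" using Psi_one by simp
    fix x y assume "x \<in> ?N" "y \<in> ?N"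
    thus "x \<otimes>\<^bsub>GG\<^esub> y \<in> ?N" using Psi_mult by auto
  next
    fix x assume x: "x \<in> ?N"
    show "inv\<^bsub>GG\<^esub> x \<in> ?N"
    proof (simp, intro conjI ballI)
      show "inv\<^bsub>GG\<^esub> x \<in> carrier GG" using x by simp
      fix p assume p: "p \<in> X"
      have "Psi (inv\<^bsub>GG\<^esub> x) (Psi x p) = p" using Psi_inv[of x p] x p by simp
      moreover have "Psi x p = p" using x p by simp
      ultimately show "Psi (inv\<^bsub>GG\<^esub> x) p = p" by simp
    qed
  qed
  have nN: "?N \<lhd> GG"
  proof (rule G.normal_invI[OF sN])
    fix x h assume x: "x \<in> carrier GG" and h: "h \<in> ?N"
    show "x \<otimes>\<^bsub>GG\<^esub> h \<otimes>\<^bsub>GG\<^esub> inv\<^bsub>GG\<^esub> x \<in> ?N"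
    proof (simp, intro conjI ballI)
      show "x \<otimes>\<^bsub>GG\<^esub> h \<otimes>\<^bsub>GG\<^esub> inv\<^bsub>GG\<^esub> x \<in> carrier GG" using x h by simp
      fix p assume p: "p \<in> X"
      have "Psi (x \<otimes>\<^bsub>GG\<^esub> h \<otimes>\<^bsub>GG\<^esub> inv\<^bsub>GG\<^esub> x) p = Psi x (Psi h (Psi (inv\<^bsub>GG\<^esub> x) p))"
        using Psi_mult Psi_closed x h p by simp
      also have "\<dots> = Psi x (Psi (inv\<^bsub>GG\<^esub> x) p)" using h Psi_closed x p by simp
      also have "\<dots> = p" using Psi_inv2 x p by simp
      finally show "Psi (x \<otimes>\<^bsub>GG\<^esub> h \<otimes>\<^bsub>GG\<^esub> inv\<^bsub>GG\<^esub> x) p = p" .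
    qed
  qed
  have "finite (rcosets\<^bsub>GG\<^esub> ?N)"
  proof (rule G.finite_rcosets_map[OF sN, where f = "\<lambda>A. restrict (Psi A) X"])
    have "(\<lambda>A. restrict (Psi A) X) ` carrier GG \<subseteq> Pi\<^sub>E X (\<lambda>_. X)" using Psi_closed by auto
    thus "finite ((\<lambda>A. restrict (Psi A) X) ` carrier GG)" using finite_PiE[OF fin, of "\<lambda>_. X"] fin finite_subset by blast
    fix a b assume a: "a \<in> carrier GG" and b: "b \<in> carrier GG" and e: "restrict (Psi a) X = restrict (Psi b) X"
    show "a \<otimes>\<^bsub>GG\<^esub> inv\<^bsub>GG\<^esub> b \<in> ?N"
    proof (simp, intro conjI ballI)
      show "a \<otimes>\<^bsub>GG\<^esub> inv\<^bsub>GG\<^esub> b \<in> carrier GG" using a b by simp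
      fix p assume p: "p \<in> X"
      have q: "Psi (inv\<^bsub>GG\<^esub> b) p \<in> X" using Psi_closed b p by simp
      have "Psi (a \<otimes>\<^bsub>GG\<^esub> inv\<^bsub>GG\<^esub> b) p = Psi a (Psi (inv\<^bsub>GG\<^esub> b) p)" using Psi_mult a b p by simp
      also have "\<dots> = Psi b (Psi (inv\<^bsub>GG\<^esub> b) p)" using e q by (metis restrict_apply')
      also have "\<dots> = p" using Psi_inv2 b p by simp
      finally show "Psi (a \<otimes>\<^bsub>GG\<^esub> inv\<^bsub>GG\<^esub> b) p = p" .
    qed
  qed
  thus ?thesis using nN unfolding finite_index_normal_def by simp
qed

end



context hnn
begin

definition "psi = inv_into (carrier H) \<phi>"

lemma psi_closed: "z \<in> carrier H \<Longrightarrow> psi z \<in> carrier H"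
  using phi_bij unfolding psi_def bij_betw_def by (metis inv_into_into)
lemma phi_psi: "z \<in> carrier H \<Longrightarrow> \<phi> (psi z) = z"
  using phi_bij unfolding psi_def bij_betw_def by (metis f_inv_into_f)
lemma psi_phi: "y \<in> carrier H \<Longrightarrow> psi (\<phi> y) = y"
  using phi_bij unfolding psi_def bij_betw_def by (metis inv_into_f_f)
lemma phi_mult: "a \<in> carrier H \<Longrightarrow> b \<in> carrier H \<Longrightarrow> \<phi> (a \<otimes> b) = \<phi> a \<otimes> \<phi> b"
  using phi_hom unfolding hom_def by auto
lemma phi_one: "\<phi> \<one> = \<one>"
  using group_hom.hom_one[of H H \<phi>] phi_hom is_group unfolding group_hom_def group_hom_axioms_def by auto
lemma phi_inv: "a \<in> carrier H \<Longrightarrow> \<phi> (inv a) = inv (\<phi> a)"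
  using group_hom.hom_inv[of H H \<phi>] phi_hom is_group unfolding group_hom_def group_hom_axioms_def by auto
lemma psi_one: "psi \<one> = \<one>" using psi_phi[of \<one>] phi_one by simp

lemma psi_iso: "psi \<in> iso H H" unfolding psi_def using iso_set_sym[OF phi] .

lemma coset_K_inv:
  assumes "k \<in> K" "y \<in> carrier H" "x \<in> carrier H"
  shows "(k \<otimes> y \<in> K #> x) \<longleftrightarrow> (y \<in> K #> x)"
proof -
  have kc: "k \<in> carrier H" using assms K_sub by auto
  have "(k \<otimes> y \<in> K #> x) \<longleftrightarrow> k \<otimes> y \<otimes> inv x \<in> K"
    using subgroup.rcos_module[OF sK is_group] assms kc by simp
  also have "\<dots> \<longleftrightarrow> y \<otimes> inv x \<in> K"
  proof
    assume "k \<otimes> y \<otimes> inv x \<in> K"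
    hence "inv k \<otimes> (k \<otimes> y \<otimes> inv x) \<in> K" using subgroup.m_closed[OF sK] subgroup.m_inv_closed[OF sK] assms by blast
    thus "y \<otimes> inv x \<in> K" using kc assms by (simp add: m_assoc[symmetric] l_inv)
  next
    assume "y \<otimes> inv x \<in> K"
    hence "k \<otimes> (y \<otimes> inv x) \<in> K" using subgroup.m_closed[OF sK] assms by blast
    thus "k \<otimes> y \<otimes> inv x \<in> K" using kc assms by (simp add: m_assoc)
  qed
  also have "\<dots> \<longleftrightarrow> y \<in> K #> x" using subgroup.rcos_module[OF sK is_group] assms by simp
  finally show ?thesis .
qed

definition "Xs = carrier H \<times> (UNIV :: bool set)"
definition "sact h p = (h \<otimes> fst p, snd p)"
definition "sT x p = (\<phi> (fst p), snd p \<noteq> (fst p \<in> K #> x))"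
definition "sTi x p = (psi (fst p), snd p \<noteq> (psi (fst p) \<in> K #> x))"

lemma sact_instance:
  assumes x: "x \<in> carrier H"
  shows "hnn_act H K \<phi> Xs sact (sT x) (sTi x)"
proof (rule hnn_act.intro[OF hnn_axioms], unfold hnn_act_axioms_def, intro conjI allI impI)
  fix h p assume "h \<in> carrier H" "p \<in> Xs" thus "sact h p \<in> Xs" unfolding Xs_def sact_def by auto
next
  fix h h' p assume "h \<in> carrier H" "h' \<in> carrier H" "p \<in> Xs"
  thus "sact (h \<otimes> h') p = sact h (sact h' p)" unfolding Xs_def sact_def by (auto simp: m_assoc)
next
  fix p assume "p \<in> Xs" thus "sact \<one> p = p" unfolding Xs_def sact_def by auto
next
  fix p assume "p \<in> Xs" thus "sT x p \<in> Xs" unfolding Xs_def sT_def by (auto simp: phi_closed)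
next
  fix p assume "p \<in> Xs" thus "sTi x p \<in> Xs" unfolding Xs_def sTi_def by (auto simp: psi_closed)
next
  fix p assume "p \<in> Xs" thus "sT x (sTi x p) = p" unfolding Xs_def sT_def sTi_def by (auto simp: phi_psi)
next
  fix p assume "p \<in> Xs" thus "sTi x (sT x p) = p" unfolding Xs_def sT_def sTi_def by (auto simp: psi_phi)
next
  fix k p assume k: "k \<in> K" and p: "p \<in> Xs"
  have kc: "k \<in> carrier H" using k K_sub by auto
  have pc: "fst p \<in> carrier H" using p unfolding Xs_def by auto
  show "sT x (sact k (sTi x p)) = sact (\<phi> k) p"
    unfolding sT_def sact_def sTi_def
    using coset_K_inv[OF k psi_closed[OF pc] x] kc pc psi_closed[OF pc]
    by (auto simp: phi_mult phi_psi)
qed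

definition "iota h = cl [Inl h]"

lemma iota_closed: "h \<in> carrier H \<Longrightarrow> iota h \<in> carrier GG"
  unfolding iota_def by (rule cl_in) simp

lemma iota_mult: "a \<in> carrier H \<Longrightarrow> b \<in> carrier H \<Longrightarrow> iota (a \<otimes> b) = iota a \<otimes>\<^bsub>GG\<^esub> iota b"
proof -
  assume a: "a \<in> carrier H" and b: "b \<in> carrier H"
  have "([Inl a, Inl b], [Inl (a \<otimes> b)]) \<in> R" using hnn_rel.rel_mult[OF a b] .
  hence "cl [Inl a, Inl b] = cl [Inl (a \<otimes> b)]" using cl_eq a b by simp
  thus ?thesis unfolding iota_def using cl_mult[of "[Inl a]" "[Inl b]"] a b by simp
qed

lemma iota_hom: "iota \<in> hom H GG"
  unfolding hom_def using iota_closed iota_mult by auto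

lemma iota_phi_hom: "(\<lambda>h. iota (\<phi> h)) \<in> hom H GG"
  unfolding hom_def using iota_closed iota_mult phi_closed phi_mult by auto

lemma iota_inj: assumes h: "h \<in> carrier H" and e: "iota h = \<one>\<^bsub>GG\<^esub>" shows "h = \<one>"
proof -
  interpret A: hnn_act H K \<phi> Xs sact "sT \<one>" "sTi \<one>" using sact_instance by simp
  have p: "(\<one>, False) \<in> Xs" unfolding Xs_def by simp
  have "A.Psi (iota h) (\<one>, False) = (h, False)"
    unfolding iota_def using A.Psi_cl[of "[Inl h]"] h p by (simp add: sact_def)
  moreover have "A.Psi \<one>\<^bsub>GG\<^esub> (\<one>, False) = (\<one>, False)" using A.Psi_one p by simp
  ultimately show ?thesis using e by simp
qed

definition "wit x = [Inr True, Inl x, Inr False, Inl (inv (\<phi> x))]"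

lemma wit_words: "x \<in> carrier H \<Longrightarrow> wit x \<in> W"
  unfolding wit_def using phi_closed by auto

lemma wit_nontrivial:
  assumes x: "x \<in> carrier H" "x \<notin> K"
  shows "cl (wit x) \<noteq> \<one>\<^bsub>GG\<^esub>"
proof
  assume e: "cl (wit x) = \<one>\<^bsub>GG\<^esub>"
  interpret A: hnn_act H K \<phi> Xs sact "sT x" "sTi x" using sact_instance x by simp
  have px: "\<phi> x \<in> carrier H" using phi_closed x by simp
  have p: "(\<phi> x, False) \<in> Xs" unfolding Xs_def using px by simp
  have one_notin: "\<one> \<notin> K #> x"
  proof
    assume "\<one> \<in> K #> x"
    hence "\<one> \<otimes> inv x \<in> K" using subgroup.rcos_module[OF sK is_group] x by simp
    hence "inv x \<in> K" using x by simp
    thus False using subgroup.m_inv_closed[OF sK, of "inv x"] x inv_inv by metis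
  qed
  have x_in: "x \<in> K #> x" using rcos_self[OF x(1) sK] .
  have "A.Psi (cl (wit x)) (\<phi> x, False) = (\<phi> x, True)"
    using A.Psi_cl[OF wit_words[OF x(1)] p] px x one_notin x_in
    by (simp add: wit_def sact_def sT_def sTi_def psi_one)
  moreover have "A.Psi \<one>\<^bsub>GG\<^esub> (\<phi> x, False) = (\<phi> x, False)" using A.Psi_one p by simp
  ultimately show False using e by simp
qed

end



context hnn
begin

lemma wit_decomp:
  assumes k: "k \<in> K" and m: "m \<in> carrier H"
  shows "cl (wit (k \<otimes> m)) = cl ([Inl (\<phi> k)] @ [Inr True, Inl m, Inr False] @ [Inl (inv (\<phi> m))] @ [Inl (inv (\<phi> k))])"
proof -
  have kc: "k \<in> carrier H" using k K_sub by auto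
  let ?t = "Inr True :: 'a + bool" and ?t' = "Inr False :: 'a + bool"
  let ?ix = "Inl (inv (\<phi> (k \<otimes> m)))"
  have ix: "inv (\<phi> (k \<otimes> m)) \<in> carrier H" using kc m phi_closed by simp
  have s1: "([?t] @ [Inl k, Inl m] @ [?t', ?ix], [?t] @ [Inl (k \<otimes> m)] @ [?t', ?ix]) \<in> R"
    using rel_ctxt[OF hnn_rel.rel_mult[OF kc m], of "[?t]" "[?t', ?ix]"] ix by simp
  have s2: "([?t, Inl k] @ [] @ [Inl m, ?t', ?ix], [?t, Inl k] @ [?t', ?t] @ [Inl m, ?t', ?ix]) \<in> R"
    using rel_ctxt[OF hnn_rel.rel_sym[OF hnn_rel.t_inv2], of "[?t, Inl k]" "[Inl m, ?t', ?ix]"] ix kc m by simp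
  have s3: "([] @ [?t, Inl k, ?t'] @ [?t, Inl m, ?t', ?ix], [] @ [Inl (\<phi> k)] @ [?t, Inl m, ?t', ?ix]) \<in> R"
    using rel_ctxt[OF hnn_rel.rel_conj[OF k], of "[]" "[?t, Inl m, ?t', ?ix]"] ix kc m by simp
  have e: "inv (\<phi> m) \<otimes> inv (\<phi> k) = inv (\<phi> (k \<otimes> m))"
    using kc m phi_closed by (simp add: phi_mult inv_mult_group)
  have s4: "([Inl (\<phi> k), ?t, Inl m, ?t'] @ [Inl (inv (\<phi> m)), Inl (inv (\<phi> k))] @ [],
             [Inl (\<phi> k), ?t, Inl m, ?t'] @ [Inl (inv (\<phi> m) \<otimes> inv (\<phi> k))] @ []) \<in> R"
    using rel_ctxt[OF hnn_rel.rel_mult[of "inv (\<phi> m)" H "inv (\<phi> k)"], of "[Inl (\<phi> k), ?t, Inl m, ?t']" "[]"] kc m phi_closed by simp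
  have "(wit (k \<otimes> m), [Inl (\<phi> k), ?t, Inl m, ?t', Inl (inv (\<phi> m)), Inl (inv (\<phi> k))]) \<in> R"
  proof -
    have a: "(wit (k \<otimes> m), [?t, Inl k, Inl m, ?t', ?ix]) \<in> R" using hnn_rel.rel_sym[OF s1] unfolding wit_def by simp
    have b: "([?t, Inl k, Inl m, ?t', ?ix], [?t, Inl k, ?t', ?t, Inl m, ?t', ?ix]) \<in> R" using s2 by simp
    have c: "([?t, Inl k, ?t', ?t, Inl m, ?t', ?ix], [Inl (\<phi> k), ?t, Inl m, ?t', ?ix]) \<in> R" using s3 by simp
    have d: "([Inl (\<phi> k), ?t, Inl m, ?t', ?ix], [Inl (\<phi> k), ?t, Inl m, ?t', Inl (inv (\<phi> m)), Inl (inv (\<phi> k))]) \<in> R"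
      using hnn_rel.rel_sym[OF s4] e by simp
    show ?thesis using hnn_rel.rel_trans[OF hnn_rel.rel_trans[OF hnn_rel.rel_trans[OF a b] c] d] .
  qed
  thus ?thesis using cl_eq wit_words kc m phi_closed rel_words by auto
qed

lemma RF_imp:
  assumes RF: "residually_finite GG"
  shows "residually_finite H \<and> residually_separable K H"
proof
  interpret G: group GG by (rule group_GG)
  show "residually_finite H"
    unfolding residually_finite_def
  proof (intro ballI impI)
    fix h assume h: "h \<in> carrier H" "h \<noteq> \<one>"
    have "iota h \<noteq> \<one>\<^bsub>GG\<^esub>" using iota_inj h by blast
    then obtain N where N: "finite_index_normal GG N" "iota h \<notin> N"
      using RF iota_closed[OF h(1)] unfolding residually_finite_def by blast
    have "finite_index_normal H {x \<in> carrier H. iota x \<in> N}"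
      using fin_normal_preimage[OF is_group group_GG iota_hom N(1)] .
    thus "\<exists>N. finite_index_normal H N \<and> h \<notin> N" using N(2) by blast
  qed
  show "residually_separable K H"
    unfolding residually_separable_def
  proof (intro ballI)
    fix x assume x: "x \<in> carrier H - K"
    hence xc: "x \<in> carrier H" and xK: "x \<notin> K" by auto
    have wc: "cl (wit x) \<in> carrier GG" using cl_in wit_words xc by blast
    obtain N where N: "finite_index_normal GG N" "cl (wit x) \<notin> N"
      using RF wc wit_nontrivial[OF xc xK] unfolding residually_finite_def by blast
    have Nn: "N \<lhd> GG" using N unfolding finite_index_normal_def by auto
    have sN: "subgroup N GG" using Nn normal_imp_subgroup by auto
    let ?P = "{y \<in> carrier H. iota y \<in> N} \<inter> {y \<in> carrier H. iota (\<phi> y) \<in> N}"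
    have P: "finite_index_normal H ?P"
      using rcosets_fin_Int fin_normal_preimage[OF is_group group_GG iota_hom N(1)]
        fin_normal_preimage[OF is_group group_GG iota_phi_hom N(1)] by simp
    have "x \<notin> K <#> ?P"
    proof
      assume "x \<in> K <#> ?P"
      then obtain k m where km: "k \<in> K" "m \<in> ?P" "x = k \<otimes> m" unfolding set_mult_def by auto
      have kc: "k \<in> carrier H" using km K_sub by auto
      have mc: "m \<in> carrier H" using km by auto
      define a where "a = iota (\<phi> k)"
      define c where "c = cl [Inr True]"
      have ac: "a \<in> carrier GG" unfolding a_def using iota_closed phi_closed kc by simp
      have cc: "c \<in> carrier GG" unfolding c_def by (rule cl_in) simp
      have im: "iota m \<in> N" and ipm: "iota (\<phi> m) \<in> N" using km by auto
      have ipmc: "iota (\<phi> m) \<in> carrier GG" using iota_closed phi_closed mc by simp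
      have imc: "iota m \<in> carrier GG" using iota_closed mc by simp
      have w: "cl (wit x) = a \<otimes>\<^bsub>GG\<^esub> (c \<otimes>\<^bsub>GG\<^esub> iota m \<otimes>\<^bsub>GG\<^esub> inv\<^bsub>GG\<^esub> c) \<otimes>\<^bsub>GG\<^esub> inv\<^bsub>GG\<^esub> (iota (\<phi> m)) \<otimes>\<^bsub>GG\<^esub> inv\<^bsub>GG\<^esub> a"
      proof -
        have ic: "inv\<^bsub>GG\<^esub> c = cl [Inr False]" unfolding c_def using cl_inv[of "[Inr True]"] by (simp add: winv_def)
        have ia: "inv\<^bsub>GG\<^esub> a = cl [Inl (inv (\<phi> k))]" unfolding a_def iota_def
          using cl_inv[of "[Inl (\<phi> k)]"] phi_closed kc by (simp add: winv_def)
        have ib: "inv\<^bsub>GG\<^esub> (iota (\<phi> m)) = cl [Inl (inv (\<phi> m))]" unfolding iota_def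
          using cl_inv[of "[Inl (\<phi> m)]"] phi_closed mc by (simp add: winv_def)
        show ?thesis unfolding km(3) wit_decomp[OF km(1) mc] ic ia ib unfolding a_def c_def iota_def
          using phi_closed kc mc by (simp add: cl_mult)
      qed
      have "c \<otimes>\<^bsub>GG\<^esub> iota m \<otimes>\<^bsub>GG\<^esub> inv\<^bsub>GG\<^esub> c \<in> N" using G.normal_invE(2)[OF Nn cc im] .
      moreover have "inv\<^bsub>GG\<^esub> (iota (\<phi> m)) \<in> N" using subgroup.m_inv_closed[OF sN ipm] .
      ultimately have "(c \<otimes>\<^bsub>GG\<^esub> iota m \<otimes>\<^bsub>GG\<^esub> inv\<^bsub>GG\<^esub> c) \<otimes>\<^bsub>GG\<^esub> inv\<^bsub>GG\<^esub> (iota (\<phi> m)) \<in> N"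
        using subgroup.m_closed[OF sN] by blast
      hence "a \<otimes>\<^bsub>GG\<^esub> ((c \<otimes>\<^bsub>GG\<^esub> iota m \<otimes>\<^bsub>GG\<^esub> inv\<^bsub>GG\<^esub> c) \<otimes>\<^bsub>GG\<^esub> inv\<^bsub>GG\<^esub> (iota (\<phi> m))) \<otimes>\<^bsub>GG\<^esub> inv\<^bsub>GG\<^esub> a \<in> N"
        using G.normal_invE(2)[OF Nn ac] by blast
      moreover have "a \<otimes>\<^bsub>GG\<^esub> ((c \<otimes>\<^bsub>GG\<^esub> iota m \<otimes>\<^bsub>GG\<^esub> inv\<^bsub>GG\<^esub> c) \<otimes>\<^bsub>GG\<^esub> inv\<^bsub>GG\<^esub> (iota (\<phi> m))) \<otimes>\<^bsub>GG\<^esub> inv\<^bsub>GG\<^esub> a = cl (wit x)"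
        unfolding w using ac cc imc ipmc by (simp add: G.m_assoc)
      ultimately show False using N(2) by simp
    qed
    thus "\<exists>N. finite_index_normal H N \<and> x \<notin> K <#> N" using P by blast
  qed
qed

end



lemma (in group) iso_image_rcos:
  assumes phi: "\<phi> \<in> iso G G" and N: "N \<subseteq> carrier G" and a: "a \<in> carrier G"
  shows "\<phi> ` (N #> a) = (\<phi> ` N) #> \<phi> a"
proof -
  have hom: "\<phi> \<in> hom G G" using phi unfolding iso_def by auto
  show ?thesis
  proof (intro equalityI subsetI)
    fix x assume "x \<in> \<phi> ` (N #> a)"
    thus "x \<in> (\<phi> ` N) #> \<phi> a" unfolding r_coset_def using hom a N by (auto simp: hom_mult subsetD)
  next
    fix x assume "x \<in> (\<phi> ` N) #> \<phi> a"
    then obtain n where n: "n \<in> N" "x = \<phi> n \<otimes> \<phi> a" unfolding r_coset_def by auto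
    hence "x = \<phi> (n \<otimes> a)" using hom a N by (auto simp: hom_mult subsetD)
    thus "x \<in> \<phi> ` (N #> a)" using n unfolding r_coset_def by auto
  qed
qed

fun tcount :: "('a + bool) list \<Rightarrow> nat" where
  "tcount [] = 0"
| "tcount (Inl h # s) = tcount s"
| "tcount (Inr b # s) = Suc (tcount s)"

lemma tcount_append: "tcount (u @ v) = tcount u + tcount v"
proof (induction u)
  case (Cons l u)
  then show ?case by (cases l) auto
qed simp

context hnn
begin

fun hev :: "('a + bool) list \<Rightarrow> 'a" where
  "hev [] = \<one>"
| "hev (Inl h # s) = h \<otimes> hev s"
| "hev (Inr b # s) = (if b then \<phi> (hev s) else psi (hev s))"

lemma hev_closed: "s \<in> W \<Longrightarrow> hev s \<in> carrier H"
proof (induction s)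
  case (Cons l s)
  then show ?case by (cases l) (auto simp: phi_closed psi_closed words_Cons)
qed simp

lemma K_lcos:
  assumes k: "k \<in> K" and Y: "Y \<subseteq> carrier H"
  shows "K <#> (k <# Y) = K <#> Y"
proof -
  have kc: "k \<in> carrier H" using k K_sub by auto
  show ?thesis
  proof (intro equalityI subsetI)
    fix x assume "x \<in> K <#> (k <# Y)"
    then obtain k1 y where "k1 \<in> K" "y \<in> Y" "x = k1 \<otimes> (k \<otimes> y)" unfolding set_mult_def l_coset_def by auto
    moreover have "k1 \<otimes> k \<in> K" using subgroup.m_closed[OF sK] k \<open>k1 \<in> K\<close> by blast
    moreover have "k1 \<otimes> (k \<otimes> y) = (k1 \<otimes> k) \<otimes> y" using kc Y K_sub \<open>k1 \<in> K\<close> \<open>y \<in> Y\<close> by (metis m_assoc subsetD)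
    ultimately show "x \<in> K <#> Y" unfolding set_mult_def by auto
  next
    fix x assume "x \<in> K <#> Y"
    then obtain k1 y where k1: "k1 \<in> K" "y \<in> Y" "x = k1 \<otimes> y" unfolding set_mult_def by auto
    have k1c: "k1 \<in> carrier H" using k1 K_sub by auto
    have "k1 \<otimes> inv k \<in> K" using subgroup.m_closed[OF sK] subgroup.m_inv_closed[OF sK] k k1 by blast
    moreover have "x = (k1 \<otimes> inv k) \<otimes> (k \<otimes> y)"
    proof -
      have yc: "y \<in> carrier H" using k1 Y by auto
      have "(k1 \<otimes> inv k) \<otimes> (k \<otimes> y) = k1 \<otimes> (inv k \<otimes> (k \<otimes> y))" using kc k1c yc by (simp add: m_assoc)
      also have "inv k \<otimes> (k \<otimes> y) = y" using kc yc by (metis inv_closed l_inv l_one m_assoc)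
      finally show ?thesis using k1 by simp
    qed
    ultimately show "x \<in> K <#> (k <# Y)" using k1 unfolding set_mult_def l_coset_def by auto
  qed
qed

lemma key_neq:
  assumes M: "M \<lhd> H" and h: "h \<in> carrier H" "h \<notin> K <#> M" and y: "y \<in> carrier H"
  shows "K <#> (M #> (h \<otimes> y)) \<noteq> K <#> (M #> y)"
proof
  assume e: "K <#> (M #> (h \<otimes> y)) = K <#> (M #> y)"
  have sM: "subgroup M H" using M normal_imp_subgroup by auto
  have "h \<otimes> y \<in> K <#> (M #> (h \<otimes> y))"
  proof -
    have "\<one> \<otimes> (\<one> \<otimes> (h \<otimes> y)) \<in> K <#> (M #> (h \<otimes> y))"
      unfolding set_mult_def r_coset_def using subgroup.one_closed[OF sK] subgroup.one_closed[OF sM] by blast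
    thus ?thesis using h y by simp
  qed
  hence "h \<otimes> y \<in> K <#> (M #> y)" using e by simp
  then obtain k m where km: "k \<in> K" "m \<in> M" "h \<otimes> y = k \<otimes> (m \<otimes> y)" unfolding set_mult_def r_coset_def by auto
  have kc: "k \<in> carrier H" and mc: "m \<in> carrier H" using km K_sub subgroup.subset[OF sM] by auto
  have "h = k \<otimes> m" using km(3) h y kc mc by (metis m_assoc m_closed right_cancel)
  thus False using h(2) km unfolding set_mult_def by auto
qed

end

locale hnn_perm = hnn +
  fixes M :: "'a set" and n :: nat and sig :: "'a set \<Rightarrow> nat \<Rightarrow> nat"
  assumes M_normal: "M \<lhd> H" and M_fin: "finite (rcosets M)" and M_inv: "\<phi> ` M = M"
    and sig_bij: "\<And>\<kappa>. bij_betw (sig \<kappa>) {..n} {..n}"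
begin

definition "Xp = (rcosets M) \<times> {..n}"
definition "pact h p = (h <# fst p, snd p)"
definition "pT p = (\<phi> ` fst p, sig (K <#> fst p) (snd p))"
definition "pTi p = (psi ` fst p, inv_into {..n} (sig (K <#> (psi ` fst p))) (snd p))"

lemma M_sub: "M \<subseteq> carrier H" using M_normal normal_imp_subgroup subgroup.subset by blast

lemma psi_M: "psi ` M = M"
proof -
  have "psi ` M = psi ` (\<phi> ` M)" using M_inv by simp
  also have "\<dots> = M" using M_sub psi_phi by (auto simp: image_image subsetD intro!: image_eqI)
  finally show ?thesis .
qed

lemma phi_rcos: "y \<in> carrier H \<Longrightarrow> \<phi> ` (M #> y) = M #> \<phi> y"
  using iso_image_rcos[OF phi M_sub] M_inv by simp

lemma psi_rcos: "y \<in> carrier H \<Longrightarrow> psi ` (M #> y) = M #> psi y"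
  using iso_image_rcos[OF psi_iso M_sub] psi_M by simp

lemma rcosE: "Y \<in> rcosets M \<Longrightarrow> (\<And>y. y \<in> carrier H \<Longrightarrow> Y = M #> y \<Longrightarrow> P) \<Longrightarrow> P"
  unfolding RCOSETS_def by auto

lemma finite_Xp: "finite Xp" unfolding Xp_def using M_fin by simp

lemma sig_in: "i \<le> n \<Longrightarrow> sig \<kappa> i \<le> n" using sig_bij[of \<kappa>] bij_betw_apply by fastforce

lemma sinv_in: "i \<le> n \<Longrightarrow> inv_into {..n} (sig \<kappa>) i \<le> n"
  using sig_bij[of \<kappa>] by (metis atMost_iff bij_betw_def inv_into_into)

lemma sig_sinv: "i \<le> n \<Longrightarrow> sig \<kappa> (inv_into {..n} (sig \<kappa>) i) = i"
  using sig_bij[of \<kappa>] by (metis atMost_iff bij_betw_inv_into_right)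

lemma sinv_sig: "i \<le> n \<Longrightarrow> inv_into {..n} (sig \<kappa>) (sig \<kappa> i) = i"
  using sig_bij[of \<kappa>] by (metis atMost_iff bij_betw_inv_into_left)

lemma sinv_eq: "i \<le> n \<Longrightarrow> j \<le> n \<Longrightarrow> sig \<kappa> j = i \<Longrightarrow> inv_into {..n} (sig \<kappa>) i = j"
  using sinv_sig by blast

lemma perm_instance: "hnn_act H K \<phi> Xp pact pT pTi"
proof (rule hnn_act.intro[OF hnn_axioms], unfold hnn_act_axioms_def, intro conjI allI impI)
  fix h p assume h: "h \<in> carrier H" and p: "p \<in> Xp"
  thus "pact h p \<in> Xp" unfolding Xp_def pact_def using lmult_rcosets[OF M_normal h] by auto
next
  fix h h' p assume "h \<in> carrier H" "h' \<in> carrier H" "p \<in> Xp"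
  thus "pact (h \<otimes> h') p = pact h (pact h' p)" unfolding Xp_def pact_def
    using lcos_m_assoc rcosets_sub[OF M_normal] by auto
next
  fix p assume "p \<in> Xp" thus "pact \<one> p = p" unfolding Xp_def pact_def
    using lcos_mult_one rcosets_sub[OF M_normal] by (cases p) auto
next
  fix p assume p: "p \<in> Xp"
  then obtain Y i where Y: "p = (Y, i)" "Y \<in> rcosets M" "i \<le> n" unfolding Xp_def by auto
  then obtain y where y: "y \<in> carrier H" "Y = M #> y" by (elim rcosE)
  show "pT p \<in> Xp" unfolding pT_def Xp_def using Y y phi_rcos phi_closed sig_in rcosetsI[OF M_sub] by auto
next
  fix p assume p: "p \<in> Xp"
  then obtain Y i where Y: "p = (Y, i)" "Y \<in> rcosets M" "i \<le> n" unfolding Xp_def by auto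
  then obtain y where y: "y \<in> carrier H" "Y = M #> y" by (elim rcosE)
  show "pTi p \<in> Xp" unfolding pTi_def Xp_def using Y y psi_rcos psi_closed sinv_in rcosetsI[OF M_sub] by auto
next
  fix p assume p: "p \<in> Xp"
  then obtain Y i where Y: "p = (Y, i)" "Y \<in> rcosets M" "i \<le> n" unfolding Xp_def by auto
  then obtain y where y: "y \<in> carrier H" "Y = M #> y" by (elim rcosE)
  show "pT (pTi p) = p" unfolding pT_def pTi_def
    using Y y psi_rcos phi_rcos psi_closed phi_psi sig_sinv by auto
next
  fix p assume p: "p \<in> Xp"
  then obtain Y i where Y: "p = (Y, i)" "Y \<in> rcosets M" "i \<le> n" unfolding Xp_def by auto
  then obtain y where y: "y \<in> carrier H" "Y = M #> y" by (elim rcosE)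
  show "pTi (pT p) = p" unfolding pT_def pTi_def
    using Y y psi_rcos phi_rcos phi_closed psi_phi sinv_sig by auto
next
  fix k p assume k: "k \<in> K" and p: "p \<in> Xp"
  then obtain Y i where Y: "p = (Y, i)" "Y \<in> rcosets M" "i \<le> n" unfolding Xp_def by auto
  then obtain y where y: "y \<in> carrier H" "Y = M #> y" by (elim rcosE)
  have kc: "k \<in> carrier H" using k K_sub by auto
  let ?Y' = "psi ` Y"
  have Y': "?Y' = M #> psi y" using psi_rcos y by simp
  have Y'c: "?Y' \<subseteq> carrier H" using Y' r_coset_subset_G[OF M_sub psi_closed[OF y(1)]] by simp
  have "k <# ?Y' = M #> (k \<otimes> psi y)" using Y' normal_lmult_rcos[OF M_normal kc psi_closed[OF y(1)]] by simp
  hence "\<phi> ` (k <# ?Y') = M #> (\<phi> k \<otimes> y)" using phi_rcos kc psi_closed y phi_mult phi_psi by simp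
  also have "\<dots> = \<phi> k <# Y" using normal_lmult_rcos[OF M_normal phi_closed[OF kc] y(1)] y by simp
  finally have e1: "\<phi> ` (k <# ?Y') = \<phi> k <# Y" .
  have e2: "K <#> (k <# ?Y') = K <#> ?Y'" using K_lcos[OF k Y'c] .
  show "pT (pact k (pTi p)) = pact (\<phi> k) p"
    unfolding pT_def pact_def pTi_def using Y e1 e2 sig_sinv by simp
qed

sublocale P: hnn_act H K \<phi> Xp pact pT pTi by (rule perm_instance)

lemma trajectory:
  assumes w: "w \<in> W" and tcw: "tcount w \<le> n"
    and cT: "\<And>u s. w = u @ Inr True # s \<Longrightarrow> sig (K <#> (M #> hev s)) (tcount s) = Suc (tcount s)"
    and cF: "\<And>u s. w = u @ Inr False # s \<Longrightarrow> sig (K <#> (M #> psi (hev s))) (Suc (tcount s)) = tcount s"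
  shows "w = u @ s \<Longrightarrow> P.ev s (M, 0) = (M #> hev s, tcount s)"
proof (induction s arbitrary: u)
  case Nil
  then show ?case using coset_mult_one[OF M_sub] by simp
next
  case (Cons l s)
  have sW: "s \<in> W" using Cons.prems w by (cases l) (auto simp: words_Cons)
  have hs: "hev s \<in> carrier H" using hev_closed[OF sW] .
  have IH: "P.ev s (M, 0) = (M #> hev s, tcount s)" using Cons.IH[of "u @ [l]"] Cons.prems by simp
  have tcs: "tcount (l # s) \<le> n" using tcw Cons.prems tcount_append[of u "l # s"] by simp
  show ?case
  proof (cases l)
    case (Inl h)
    have h: "h \<in> carrier H" using Cons.prems w Inl by auto
    have "P.ev (l # s) (M, 0) = pact h (M #> hev s, tcount s)" using Inl IH by simp
    moreover have "pact h (M #> hev s, tcount s) = (M #> hev (l # s), tcount (l # s))"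
      using Inl normal_lmult_rcos[OF M_normal h hs] by (simp add: pact_def)
    ultimately show ?thesis by (rule trans)
  next
    case (Inr b)
    show ?thesis
    proof (cases b)
      case True
      have "sig (K <#> (M #> hev s)) (tcount s) = Suc (tcount s)" using cT[of u s] Cons.prems Inr True by simp
      hence "pT (M #> hev s, tcount s) = (M #> hev (l # s), tcount (l # s))"
        using Inr True phi_rcos[OF hs] by (simp add: pT_def)
      moreover have "P.ev (l # s) (M, 0) = pT (M #> hev s, tcount s)" using Inr True IH by simp
      ultimately show ?thesis by simp
    next
      case False
      have c: "sig (K <#> (M #> psi (hev s))) (Suc (tcount s)) = tcount s" using cF[of u s] Cons.prems Inr False by simp
      have "inv_into {..n} (sig (K <#> (M #> psi (hev s)))) (tcount s) = Suc (tcount s)"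
        using sinv_eq[OF _ _ c] tcs Inr by simp
      hence "pTi (M #> hev s, tcount s) = (M #> hev (l # s), tcount (l # s))"
        using Inr False psi_rcos[OF hs] by (simp add: pTi_def)
      moreover have "P.ev (l # s) (M, 0) = pTi (M #> hev s, tcount s)" using Inr False IH by simp
      ultimately show ?thesis by simp
    qed
  qed
qed

end



lemma perm_extend:
  fixes P :: "(nat \<times> nat) set"
  assumes sub: "P \<subseteq> {..n} \<times> {..n}"
    and fn: "\<And>a b b'. (a, b) \<in> P \<Longrightarrow> (a, b') \<in> P \<Longrightarrow> b = b'"
    and inj: "\<And>a a' b. (a, b) \<in> P \<Longrightarrow> (a', b) \<in> P \<Longrightarrow> a = a'"
  shows "\<exists>\<sigma>. bij_betw \<sigma> {..n} {..n} \<and> (\<forall>(a, b)\<in>P. \<sigma> a = b)"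
proof -
  define A where "A = {..n}"
  define D where "D = fst ` P"
  define E where "E = snd ` P"
  define f where "f a = (THE b. (a, b) \<in> P)" for a
  have fP: "(a, b) \<in> P \<Longrightarrow> f a = b" for a b unfolding f_def using fn by blast
  have bf: "bij_betw f D E"
  proof (rule bij_betwI')
    fix x y assume "x \<in> D" "y \<in> D"
    then obtain bx bx2 where "(x, bx) \<in> P" "(y, bx2) \<in> P" unfolding D_def by force
    thus "(f x = f y) = (x = y)" using fP inj fn by metis
  next
    fix x assume "x \<in> D"
    then obtain bx where "(x, bx) \<in> P" unfolding D_def by force
    thus "f x \<in> E" using fP unfolding E_def by force
  next
    fix y assume "y \<in> E"
    then obtain x where "(x, y) \<in> P" unfolding E_def by force
    thus "\<exists>x\<in>D. y = f x" using fP unfolding D_def by force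
  qed
  have DA: "D \<subseteq> A" and EA: "E \<subseteq> A" using sub unfolding D_def E_def A_def by auto
  have finA: "finite A" unfolding A_def by simp
  have "card D = card E" using bij_betw_same_card[OF bf] .
  hence "card (A - D) = card (A - E)"
    using card_Diff_subset[OF finite_subset[OF DA finA] DA] card_Diff_subset[OF finite_subset[OF EA finA] EA] by simp
  then obtain g where g: "bij_betw g (A - D) (A - E)" using finite_same_card_bij[of "A - D" "A - E"] finA by auto
  define \<sigma> where "\<sigma> x = (if x \<in> D then f x else g x)" for x
  have "bij_betw \<sigma> (D \<union> (A - D)) (E \<union> (A - E))"
  proof (rule bij_betw_combine)
    show "bij_betw \<sigma> D E" using bf by (rule bij_betw_cong[THEN iffD1, rotated]) (simp add: \<sigma>_def)
    show "bij_betw \<sigma> (A - D) (A - E)" using g by (rule bij_betw_cong[THEN iffD1, rotated]) (simp add: \<sigma>_def)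
    show "E \<inter> (A - E) = {}" by auto
  qed
  moreover have "D \<union> (A - D) = A" "E \<union> (A - E) = A" using DA EA by auto
  ultimately have "bij_betw \<sigma> A A" by simp
  moreover have "\<forall>(a, b)\<in>P. \<sigma> a = b" using fP unfolding \<sigma>_def D_def by force
  ultimately show ?thesis unfolding A_def by blast
qed

lemma suffix_cmp:
  assumes e: "u1 @ x1 # s1 = u2 @ x2 # s2" and l: "length s2 < length s1"
  shows "\<exists>v. s1 = v @ x2 # s2"
proof -
  from e obtain us where "u1 = u2 @ us \<and> us @ x1 # s1 = x2 # s2 \<or> u1 @ us = u2 \<and> x1 # s1 = us @ x2 # s2"
    using append_eq_append_conv2 by metis
  thus ?thesis
  proof
    assume "u1 = u2 @ us \<and> us @ x1 # s1 = x2 # s2"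
    hence "length (us @ x1 # s1) = length (x2 # s2)" by simp
    hence "length s2 \<ge> length s1" by simp
    thus ?thesis using l by simp
  next
    assume a: "u1 @ us = u2 \<and> x1 # s1 = us @ x2 # s2"
    show ?thesis
    proof (cases us)
      case Nil
      thus ?thesis using a l by simp
    next
      case (Cons y v)
      thus ?thesis using a by auto
    qed
  qed
qed

lemma suffix_eq:
  assumes e: "u1 @ x1 # s1 = u2 @ x2 # s2" and l: "length s1 = length s2"
  shows "u1 = u2 \<and> x1 = x2 \<and> s1 = s2"
proof -
  have "length (x1 # s1) = length (x2 # s2)" using l by simp
  hence "u1 = u2 \<and> x1 # s1 = x2 # s2" using append_eq_append_conv[of u1 u2 "x1 # s1" "x2 # s2"] e by blast
  thus ?thesis by simp
qed



context hnn
begin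

definition reduced :: "('a + bool) list \<Rightarrow> bool" where
  "reduced w \<longleftrightarrow> (\<forall>u v a b. w \<noteq> u @ [Inl a, Inl b] @ v)
     \<and> (\<forall>u v e. w \<noteq> u @ [Inr e, Inr (\<not> e)] @ v)
     \<and> (\<forall>u v k. k \<in> K \<longrightarrow> w \<noteq> u @ [Inr True, Inl k, Inr False] @ v)
     \<and> (\<forall>u v k. k \<in> K \<longrightarrow> w \<noteq> u @ [Inr False, Inl (\<phi> k), Inr True] @ v)
     \<and> (\<forall>u v. w \<noteq> u @ [Inl \<one>] @ v)"

lemma conj2: assumes k: "k \<in> K" shows "([Inr False, Inl (\<phi> k), Inr True], [Inl k]) \<in> R"
proof -
  have kc: "k \<in> carrier H" using k K_sub by auto
  have a: "([Inr False] @ [Inl (\<phi> k)] @ [Inr True], [Inr False] @ [Inr True, Inl k, Inr False] @ [Inr True]) \<in> R"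
    using hnn_rel.rel_sym[OF rel_ctxt[OF hnn_rel.rel_conj[OF k], of "[Inr False]" "[Inr True]"]] by simp
  have b: "([] @ [Inr False, Inr True] @ [Inl k, Inr False, Inr True], [] @ [] @ [Inl k, Inr False, Inr True]) \<in> R"
    using rel_ctxt[OF hnn_rel.t_inv2, of "[]" "[Inl k, Inr False, Inr True]"] kc by simp
  have c: "([Inl k] @ [Inr False, Inr True] @ [], [Inl k] @ [] @ []) \<in> R"
    using rel_ctxt[OF hnn_rel.t_inv2, of "[Inl k]" "[]"] kc by simp
  show ?thesis using hnn_rel.rel_trans[OF hnn_rel.rel_trans[OF a[simplified] b[simplified]] c[simplified]] .
qed

lemma shorter:
  assumes w: "w \<in> W" and nr: "\<not> reduced w"
  shows "\<exists>w'. (w, w') \<in> R \<and> length w' < length w"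
proof -
  have gen: "\<exists>w'. (w, w') \<in> R \<and> length w' < length w"
    if "w = u @ x @ v" "(x, x') \<in> R" "length x' < length x" for u x x' v
  proof -
    have "u \<in> W" "v \<in> W" using w that(1) by auto
    hence "(u @ x @ v, u @ x' @ v) \<in> R" using rel_ctxt[OF that(2)] by blast
    thus ?thesis using that by auto
  qed
  from nr consider
      (a) u v a b where "w = u @ [Inl a, Inl b] @ v"
    | (b) u v e where "w = u @ [Inr e, Inr (\<not> e)] @ v"
    | (c) u v k where "k \<in> K" "w = u @ [Inr True, Inl k, Inr False] @ v"
    | (d) u v k where "k \<in> K" "w = u @ [Inr False, Inl (\<phi> k), Inr True] @ v"
    | (e) u v where "w = u @ [Inl \<one>] @ v"
    unfolding reduced_def by blast
  thus ?thesis
  proof cases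
    case a
    have "a \<in> carrier H" "b \<in> carrier H" using w a by auto
    thus ?thesis using gen[OF a hnn_rel.rel_mult] by simp
  next
    case b
    have "([Inr e, Inr (\<not> e)], []) \<in> R" using hnn_rel.t_inv1 hnn_rel.t_inv2 by (cases e) auto
    thus ?thesis using gen[OF b] by simp
  next
    case c
    thus ?thesis using gen[OF c(2) hnn_rel.rel_conj[OF c(1)]] by simp
  next
    case d
    thus ?thesis using gen[OF d(2) conj2[OF d(1)]] by simp
  next
    case e
    thus ?thesis using gen[OF e hnn_rel.rel_one] by simp
  qed
qed

lemma exists_reduced:
  assumes A: "A \<in> carrier GG"
  shows "\<exists>w. w \<in> W \<and> A = cl w \<and> reduced w"
proof -
  obtain u where u: "A = cl u" "u \<in> W" using A by (elim carrier_GG_E)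
  have "u \<in> A" using u rel_refl' by auto
  then obtain w where w: "w \<in> A" "\<forall>y. y \<in> A \<longrightarrow> length w \<le> length y"
    using ex_has_least_nat[of "\<lambda>w. w \<in> A" u length] by blast
  have uw: "(u, w) \<in> R" using w u by simp
  have wW: "w \<in> W" using rel_words[OF uw] by simp
  have Aw: "A = cl w" using u uw cl_eq wW by simp
  have "reduced w"
  proof (rule ccontr)
    assume "\<not> reduced w"
    then obtain w' where "(w, w') \<in> R" "length w' < length w" using shorter wW by blast
    moreover have "w' \<in> A" using Aw \<open>(w, w') \<in> R\<close> by simp
    ultimately show False using w(2) by fastforce
  qed
  thus ?thesis using wW Aw by blast
qed

lemma mixed:
  assumes red: "reduced w" and wW: "w \<in> W"
    and d1: "w = u1 @ Inr e1 # s1" and d2: "w = u2 @ Inr e2 # s2"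
    and ne: "e2 = (\<not> e1)" and tc: "tcount s1 = Suc (tcount s2)"
  shows "\<exists>h. h \<in> carrier H \<and> s1 = Inl h # Inr e2 # s2 \<and> w = u1 @ [Inr e1, Inl h, Inr e2] @ s2"
proof -
  have e: "u1 @ Inr e1 # s1 = u2 @ Inr e2 # s2" using d1 d2 by simp
  have "length s2 < length s1"
  proof (rule ccontr)
    assume "\<not> length s2 < length s1"
    hence "length s1 = length s2 \<or> length s1 < length s2" by auto
    thus False
    proof
      assume "length s1 = length s2"
      thus False using suffix_eq[OF e] tc by simp
    next
      assume "length s1 < length s2"
      then obtain v where "s2 = v @ Inr e1 # s1" using suffix_cmp[OF e[symmetric]] by blast
      thus False using tc tcount_append[of v "Inr e1 # s1"] by simp
    qed
  qed
  then obtain v where v: "s1 = v @ Inr e2 # s2" using suffix_cmp[OF e] by blast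
  have tv: "tcount v = 0" using tc v tcount_append[of v "Inr e2 # s2"] by simp
  show ?thesis
  proof (cases v)
    case Nil
    hence "w = u1 @ [Inr e1, Inr (\<not> e1)] @ s2" using d1 v ne by simp
    thus ?thesis using red unfolding reduced_def by blast
  next
    case (Cons l v')
    show ?thesis
    proof (cases l)
      case (Inr b)
      thus ?thesis using tv Cons by simp
    next
      case (Inl h)
      show ?thesis
      proof (cases v')
        case Nil
        have "h \<in> carrier H" using wW d1 v Cons Inl Nil by simp
        thus ?thesis using d1 v Cons Inl Nil by simp
      next
        case (Cons l2 v2)
        show ?thesis
        proof (cases l2)
          case (Inr b)
          thus ?thesis using tv \<open>v = l # v'\<close> Inl Cons by simp
        next
          case (Inl h2)
          have "w = (u1 @ [Inr e1]) @ [Inl h, Inl h2] @ (v2 @ Inr e2 # s2)"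
            using d1 v \<open>v = l # v'\<close> \<open>l = Inl h\<close> Cons Inl by simp
          thus ?thesis using red unfolding reduced_def by blast
        qed
      qed
    qed
  qed
qed

lemma tc_suffix_unique:
  assumes d1: "w = u1 @ Inr e1 # s1" and d2: "w = u2 @ Inr e2 # s2" and tc: "tcount s1 = tcount s2"
  shows "s1 = s2"
proof -
  have e: "u1 @ Inr e1 # s1 = u2 @ Inr e2 # s2" using d1 d2 by simp
  consider "length s1 = length s2" | "length s1 < length s2" | "length s2 < length s1" by linarith
  thus ?thesis
  proof cases
    case 1 thus ?thesis using suffix_eq[OF e] by simp
  next
    case 2
    then obtain v where "s2 = v @ Inr e1 # s1" using suffix_cmp[OF e[symmetric]] by blast
    thus ?thesis using tc tcount_append[of v "Inr e1 # s1"] by simp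
  next
    case 3
    then obtain v where "s1 = v @ Inr e2 # s2" using suffix_cmp[OF e] by blast
    thus ?thesis using tc tcount_append[of v "Inr e2 # s2"] by simp
  qed
qed

lemma reduced_no_t:
  assumes red: "reduced w" and wW: "w \<in> W" and tc: "tcount w = 0"
  shows "w = [] \<or> (\<exists>h. w = [Inl h] \<and> h \<in> carrier H \<and> h \<noteq> \<one>)"
proof (cases w)
  case Nil thus ?thesis by simp
next
  case (Cons l v)
  show ?thesis
  proof (cases l)
    case (Inr b) thus ?thesis using tc Cons by simp
  next
    case (Inl h)
    show ?thesis
    proof (cases v)
      case Nil
      have "h \<noteq> \<one>"
      proof
        assume "h = \<one>"
        hence "w = [] @ [Inl \<one>] @ []" using Cons Inl Nil by simp
        thus False using red unfolding reduced_def by blast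
      qed
      thus ?thesis using Cons Inl Nil wW by simp
    next
      case (Cons l2 v2)
      show ?thesis
      proof (cases l2)
        case (Inr b) thus ?thesis using tc \<open>w = l # v\<close> Inl Cons by simp
      next
        case (Inl h2)
        have "w = [] @ [Inl h, Inl h2] @ v2" using \<open>w = l # v\<close> \<open>l = Inl h\<close> Cons Inl by simp
        thus ?thesis using red unfolding reduced_def by blast
      qed
    qed
  qed
qed

end



lemma (in group) fin_normal_carrier: "finite_index_normal G (carrier G)"
proof -
  have "finite (rcosets (carrier G))"
    by (rule finite_rcosets_map[OF subgroup_self, where f = "\<lambda>_. ()"]) auto
  thus ?thesis using normal_self unfolding finite_index_normal_def by simp
qed

context hnn
begin

lemma psi_mult: "a \<in> carrier H \<Longrightarrow> b \<in> carrier H \<Longrightarrow> psi (a \<otimes> b) = psi a \<otimes> psi b"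
  using psi_iso unfolding iso_def hom_def by auto

lemma imp_RF:
  assumes fg: "finitely_generated H" and RF: "residually_finite H" and sep: "residually_separable K H"
  shows "residually_finite GG"
  unfolding residually_finite_def
proof (intro ballI impI)
  fix g assume g: "g \<in> carrier GG" "g \<noteq> \<one>\<^bsub>GG\<^esub>"
  obtain w where w: "w \<in> W" "g = cl w" "reduced w" using exists_reduced[OF g(1)] by blast
  define n where "n = tcount w"
  obtain N0 where N0: "finite_index_normal H N0" "hev w \<noteq> \<one> \<longrightarrow> hev w \<notin> N0"
  proof (cases "hev w = \<one>")
    case True thus ?thesis using that fin_normal_carrier by blast
  next
    case False thus ?thesis using that RF hev_closed[OF w(1)] unfolding residually_finite_def by blast
  qed
  define B1 where "B1 = {h. \<exists>u v. w = u @ [Inr True, Inl h, Inr False] @ v}"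
  define B2 where "B2 = {h. \<exists>u v. w = u @ [Inr False, Inl h, Inr True] @ v}"
  define B where "B = B1 \<union> psi ` B2"
  have LW: "finite {h. Inl h \<in> set w}"
  proof -
    have "{h. Inl h \<in> set w} = Inl -` set w" by auto
    thus ?thesis using finite_vimageI[OF finite_set[of w], of Inl] by (simp add: inj_on_def)
  qed
  have "B1 \<subseteq> {h. Inl h \<in> set w}" "B2 \<subseteq> {h. Inl h \<in> set w}" unfolding B1_def B2_def by auto
  hence finB: "finite B" unfolding B_def using LW finite_subset by blast
  have Bsep: "b \<in> carrier H - K" if b: "b \<in> B" for b
  proof (cases "b \<in> B1")
    case True
    then obtain u v where uv: "w = u @ [Inr True, Inl b, Inr False] @ v" unfolding B1_def by auto
    have "b \<in> carrier H" using w(1) uv by simp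
    moreover have "b \<notin> K" using w(3) uv unfolding reduced_def by blast
    ultimately show ?thesis by simp
  next
    case False
    then obtain h where h: "h \<in> B2" "b = psi h" using b unfolding B_def by auto
    then obtain u v where uv: "w = u @ [Inr False, Inl h, Inr True] @ v" unfolding B2_def by auto
    have hc: "h \<in> carrier H" using w(1) uv by simp
    have "psi h \<notin> K"
    proof
      assume "psi h \<in> K"
      moreover have "w = u @ [Inr False, Inl (\<phi> (psi h)), Inr True] @ v" using uv phi_psi[OF hc] by simp
      ultimately show False using w(3) unfolding reduced_def by blast
    qed
    thus ?thesis using h psi_closed[OF hc] by simp
  qed
  define Nb where "Nb b = (SOME N. finite_index_normal H N \<and> b \<notin> K <#> N)" for b
  have Nb: "finite_index_normal H (Nb b) \<and> b \<notin> K <#> Nb b" if "b \<in> B" for b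
  proof -
    have "\<exists>N. finite_index_normal H N \<and> b \<notin> K <#> N" using sep Bsep[OF that] unfolding residually_separable_def by blast
    thus ?thesis unfolding Nb_def by (rule someI_ex)
  qed
  define F where "F = insert N0 (Nb ` B)"
  have "finite_index_normal H (\<Inter>F)"
  proof (rule fin_normal_Inter[OF is_group])
    show "finite F" unfolding F_def using finB by simp
    show "F \<noteq> {}" unfolding F_def by simp
    show "\<forall>N\<in>F. finite_index_normal H N" unfolding F_def using N0(1) Nb by blast
  qed
  then obtain M where M: "finite_index_normal H M" "M \<subseteq> \<Inter>F" "\<phi> ` M = M"
    using fg_invariant_sub[OF fg phi] by blast
  have Mn: "M \<lhd> H" and Mf: "finite (rcosets M)" using M(1) unfolding finite_index_normal_def by auto
  have MB: "b \<notin> K <#> M" if "b \<in> B" for b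
  proof -
    have "M \<subseteq> Nb b" using M(2) that unfolding F_def by auto
    hence "K <#> M \<subseteq> K <#> Nb b" using mono_set_mult by blast
    thus ?thesis using Nb[OF that] by blast
  qed
  have M0: "hev w \<noteq> \<one> \<Longrightarrow> hev w \<notin> M" using M(2) N0(2) unfolding F_def by auto
  define con where "con = {(K <#> (M #> hev s), tcount s, Suc (tcount s)) | u s. w = u @ Inr True # s}
      \<union> {(K <#> (M #> psi (hev s)), Suc (tcount s), tcount s) | u s. w = u @ Inr False # s}"
  have conE: "P" if "(\<kappa>, a, b) \<in> con"
    "\<And>u s. w = u @ Inr True # s \<Longrightarrow> \<kappa> = K <#> (M #> hev s) \<Longrightarrow> a = tcount s \<Longrightarrow> b = Suc (tcount s) \<Longrightarrow> P"
    "\<And>u s. w = u @ Inr False # s \<Longrightarrow> \<kappa> = K <#> (M #> psi (hev s)) \<Longrightarrow> a = Suc (tcount s) \<Longrightarrow> b = tcount s \<Longrightarrow> P"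
    for \<kappa> a b P
    using that unfolding con_def by blast
  have sW: "s \<in> W" if "w = u @ Inr e # s" for u e s using w(1) that by simp
  have mixT: "K <#> (M #> hev s1) \<noteq> K <#> (M #> psi (hev s2))"
    if d1: "w = u1 @ Inr True # s1" and d2: "w = u2 @ Inr False # s2" and tc: "tcount s1 = Suc (tcount s2)" for u1 s1 u2 s2
  proof -
    obtain h where h: "h \<in> carrier H" "s1 = Inl h # Inr False # s2" "w = u1 @ [Inr True, Inl h, Inr False] @ s2"
      using mixed[OF w(3) w(1) d1 d2 _ tc] by auto
    have "h \<in> B" unfolding B_def B1_def using h(3) by blast
    hence hK: "h \<notin> K <#> M" using MB by blast
    have "hev s1 = h \<otimes> psi (hev s2)" using h(2) by simp
    thus ?thesis using key_neq[OF Mn h(1) hK psi_closed[OF hev_closed[OF sW[OF d2]]]] by simp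
  qed
  have mixF: "K <#> (M #> psi (hev s1)) \<noteq> K <#> (M #> hev s2)"
    if d1: "w = u1 @ Inr False # s1" and d2: "w = u2 @ Inr True # s2" and tc: "tcount s1 = Suc (tcount s2)" for u1 s1 u2 s2
  proof -
    obtain h where h: "h \<in> carrier H" "s1 = Inl h # Inr True # s2" "w = u1 @ [Inr False, Inl h, Inr True] @ s2"
      using mixed[OF w(3) w(1) d1 d2 _ tc] by auto
    have "psi h \<in> B" unfolding B_def B2_def using h(3) by blast
    hence hK: "psi h \<notin> K <#> M" using MB by blast
    have hs2: "hev s2 \<in> carrier H" using hev_closed[OF sW[OF d2]] .
    have "psi (hev s1) = psi h \<otimes> hev s2" using h(2) psi_mult[OF h(1) phi_closed[OF hs2]] psi_phi[OF hs2] by simp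
    thus ?thesis using key_neq[OF Mn psi_closed[OF h(1)] hK hs2] by simp
  qed
  have tcle: "Suc (tcount s) \<le> n" if "w = u @ Inr e # s" for u e s
    using that tcount_append[of u "Inr e # s"] unfolding n_def by simp
  have fn: "b = b'" if 1: "(\<kappa>, a, b) \<in> con" and 2: "(\<kappa>, a, b') \<in> con" for \<kappa> a b b'
  proof (rule conE[OF 1])
    fix u1 s1 assume a1: "w = u1 @ Inr True # s1" "\<kappa> = K <#> (M #> hev s1)" "a = tcount s1" "b = Suc (tcount s1)"
    show "b = b'"
    proof (rule conE[OF 2])
      fix u2 s2 assume "w = u2 @ Inr True # s2" "\<kappa> = K <#> (M #> hev s2)" "a = tcount s2" "b' = Suc (tcount s2)"
      thus "b = b'" using a1 by simp
    next
      fix u2 s2 assume a2: "w = u2 @ Inr False # s2" "\<kappa> = K <#> (M #> psi (hev s2))" "a = Suc (tcount s2)" "b' = tcount s2"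
      thus "b = b'" using mixT[OF a1(1) a2(1)] a1 by simp
    qed
  next
    fix u1 s1 assume a1: "w = u1 @ Inr False # s1" "\<kappa> = K <#> (M #> psi (hev s1))" "a = Suc (tcount s1)" "b = tcount s1"
    show "b = b'"
    proof (rule conE[OF 2])
      fix u2 s2 assume a2: "w = u2 @ Inr True # s2" "\<kappa> = K <#> (M #> hev s2)" "a = tcount s2" "b' = Suc (tcount s2)"
      thus "b = b'" using mixT[OF a2(1) a1(1)] a1 by simp
    next
      fix u2 s2 assume "w = u2 @ Inr False # s2" "\<kappa> = K <#> (M #> psi (hev s2))" "a = Suc (tcount s2)" "b' = tcount s2"
      thus "b = b'" using a1 by simp
    qed
  qed
  have inj: "a = a'" if 1: "(\<kappa>, a, b) \<in> con" and 2: "(\<kappa>, a', b) \<in> con" for \<kappa> a a' b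
  proof (rule conE[OF 1])
    fix u1 s1 assume a1: "w = u1 @ Inr True # s1" "\<kappa> = K <#> (M #> hev s1)" "a = tcount s1" "b = Suc (tcount s1)"
    show "a = a'"
    proof (rule conE[OF 2])
      fix u2 s2 assume "w = u2 @ Inr True # s2" "\<kappa> = K <#> (M #> hev s2)" "a' = tcount s2" "b = Suc (tcount s2)"
      thus "a = a'" using a1 by simp
    next
      fix u2 s2 assume a2: "w = u2 @ Inr False # s2" "\<kappa> = K <#> (M #> psi (hev s2))" "a' = Suc (tcount s2)" "b = tcount s2"
      thus "a = a'" using mixF[OF a2(1) a1(1)] a1 by simp
    qed
  next
    fix u1 s1 assume a1: "w = u1 @ Inr False # s1" "\<kappa> = K <#> (M #> psi (hev s1))" "a = Suc (tcount s1)" "b = tcount s1"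
    show "a = a'"
    proof (rule conE[OF 2])
      fix u2 s2 assume a2: "w = u2 @ Inr True # s2" "\<kappa> = K <#> (M #> hev s2)" "a' = tcount s2" "b = Suc (tcount s2)"
      thus "a = a'" using mixF[OF a1(1) a2(1)] a1 by simp
    next
      fix u2 s2 assume "w = u2 @ Inr False # s2" "\<kappa> = K <#> (M #> psi (hev s2))" "a' = Suc (tcount s2)" "b = tcount s2"
      thus "a = a'" using a1 by simp
    qed
  qed
  have range: "a \<le> n \<and> b \<le> n" if "(\<kappa>, a, b) \<in> con" for \<kappa> a b
    by (rule conE[OF that]) (use tcle in fastforce)+
  define sig where "sig \<kappa> = (SOME \<sigma>. bij_betw \<sigma> {..n} {..n} \<and> (\<forall>(a, b)\<in>{(a, b). (\<kappa>, a, b) \<in> con}. \<sigma> a = b))" for \<kappa>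
  have sig: "bij_betw (sig \<kappa>) {..n} {..n} \<and> (\<forall>(a, b)\<in>{(a, b). (\<kappa>, a, b) \<in> con}. sig \<kappa> a = b)" for \<kappa>
  proof -
    have "\<exists>\<sigma>. bij_betw \<sigma> {..n} {..n} \<and> (\<forall>(a, b)\<in>{(a, b). (\<kappa>, a, b) \<in> con}. \<sigma> a = b)"
      by (rule perm_extend) (use range fn inj in auto)
    thus ?thesis unfolding sig_def by (rule someI_ex)
  qed
  have sig_con: "sig \<kappa> a = b" if "(\<kappa>, a, b) \<in> con" for \<kappa> a b using sig[of \<kappa>] that by auto
  interpret Q: hnn_perm H K \<phi> M n sig
    by (rule hnn_perm.intro[OF hnn_axioms hnn_perm_axioms.intro[OF Mn Mf M(3)]]) (use sig in blast)
  have traj: "Q.P.ev w (M, 0) = (M #> hev w, tcount w)"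
  proof (rule Q.trajectory[OF w(1), of "[]"])
    show "tcount w \<le> n" unfolding n_def by simp
    fix u s assume "w = u @ Inr True # s"
    thus "sig (K <#> (M #> hev s)) (tcount s) = Suc (tcount s)" using sig_con unfolding con_def by blast
  next
    fix u s assume "w = u @ Inr False # s"
    thus "sig (K <#> (M #> psi (hev s))) (Suc (tcount s)) = tcount s" using sig_con unfolding con_def by blast
  qed simp
  define N where "N = {A \<in> carrier GG. \<forall>p\<in>Q.Xp. Q.P.Psi A p = p}"
  have NF: "finite_index_normal GG N" unfolding N_def using Q.P.kernel_fin_normal[OF Q.finite_Xp] .
  have sM: "subgroup M H" using Mn normal_imp_subgroup by auto
  have p0: "(M, 0) \<in> Q.Xp" unfolding Q.Xp_def using subgroup.subgroup_in_rcosets[OF sM is_group] by simp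
  have Pg: "Q.P.Psi g (M, 0) = (M #> hev w, n)" using Q.P.Psi_cl[OF w(1) p0] w(2) traj unfolding n_def by simp
  have ne: "(M #> hev w, n) \<noteq> (M, 0)"
  proof (cases "n = 0")
    case False thus ?thesis by simp
  next
    case True
    hence "w = [] \<or> (\<exists>h. w = [Inl h] \<and> h \<in> carrier H \<and> h \<noteq> \<one>)" using reduced_no_t[OF w(3) w(1)] unfolding n_def by simp
    moreover have "w \<noteq> []" using g w(2) one_GG by auto
    ultimately obtain h where h: "w = [Inl h]" "h \<in> carrier H" "h \<noteq> \<one>" by blast
    have hw: "hev w = h" using h by simp
    have "h \<notin> M" using M0 hw h by simp
    moreover have "h \<in> M #> h" using rcos_self[OF h(2) sM] .
    ultimately have "M #> h \<noteq> M" by auto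
    thus ?thesis using hw by simp
  qed
  have "Q.P.Psi g (M, 0) \<noteq> (M, 0)" using Pg ne by simp
  hence "g \<notin> N" unfolding N_def using p0 by blast
  thus "\<exists>N. finite_index_normal GG N \<and> g \<notin> N" using NF by blast
qed

end


theorem theoremA:
  fixes H :: "('a, 'b) monoid_scheme" and K :: "'a set" and \<phi> :: "'a \<Rightarrow> 'a"
  assumes "group H"
    and "finitely_generated H"
    and "\<phi> \<in> iso H H"
    and "subgroup K H" and "K \<noteq> carrier H"
  shows "residually_finite (HNN H K \<phi>) \<longleftrightarrow>
         (residually_finite H \<and> residually_separable K H)"
proof -
  interpret hnn H K \<phi>
    by (rule hnn.intro[OF assms(1) hnn_axioms.intro[OF assms(4) assms(3)]])
  show ?thesis using RF_imp imp_RF[OF assms(2)] by blast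
qed

end
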